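(* Let $\pi$ be a smooth representation of $G$. Then $\mathrm{Hom}_P(\mathrm{Sp},\pi)\cong\mathrm{Hom}_G(\mathrm{Ind}_P^G\mathbf 1,\pi)$, the isomorphism being restriction of $G$-maps to the $P$-subrepresentation $\kappa_{\mathbf 1}=\{f\in\mathrm{Ind}_P^G\mathbf 1: f(1)=0\}$, which maps isomorphically onto $\mathrm{Sp}|_P$.
   Context: $F$ non-Archimedean local field of residual characteristic $p$, $G=\mathrm{GL}_2(F)$, $P$ the upper triangular Borel subgroup. $\mathrm{Ind}_P^G\mathbf 1$ is the space of locally constant functions $f:G\to\overline{\mathbf F}_p$ with $f(bg)=f(g)$ for $b\in P$, with $G$ acting by right translation; it contains the constants $\mathbf 1$. $\mathrm{Sp}$ is defined by the exact sequence $0\to\mathbf 1\to\mathrm{Ind}_P^G\mathbf 1\to\mathrm{Sp}\to0$. Representations are smooth on $\overline{\mathbf F}_p$-vector spaces. *)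

theory Defs
  imports Main "HOL-Computational_Algebra.Polynomial"
begin

text \<open>v x is the (normalised, surjective) discrete valuation of x, meaningful for x \<noteq> 0;
  v 0 is irrelevant (0 has valuation +infinity, handled by vge).\<close>

definition vge :: "('f::field \<Rightarrow> int) \<Rightarrow> 'f \<Rightarrow> int \<Rightarrow> bool" where
  "vge v x n \<longleftrightarrow> x = 0 \<or> v x \<ge> n"

definition nonarch_local_field :: "('f::field \<Rightarrow> int) \<Rightarrow> nat \<Rightarrow> bool" where
  "nonarch_local_field v p \<longleftrightarrow>
     (\<forall>x y. x \<noteq> 0 \<longrightarrow> y \<noteq> 0 \<longrightarrow> v (x * y) = v x + v y) \<and>
     (\<forall>x y. x \<noteq> 0 \<longrightarrow> y \<noteq> 0 \<longrightarrow> x + y \<noteq> 0 \<longrightarrow> v (x + y) \<ge> min (v x) (v y)) \<and>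
     (\<exists>u. u \<noteq> 0 \<and> v u = 1) \<and>
     \<comment> \<open>completeness\<close>
     (\<forall>s :: nat \<Rightarrow> 'f. (\<forall>n. \<exists>N. \<forall>i\<ge>N. \<forall>j\<ge>N. vge v (s i - s j) n) \<longrightarrow>
        (\<exists>l. \<forall>n. \<exists>N. \<forall>i\<ge>N. vge v (s i - l) n)) \<and>
     \<comment> \<open>finite residue field O/m\<close>
     (\<exists>R. finite R \<and> (\<forall>r\<in>R. vge v r 0) \<and> (\<forall>x. vge v x 0 \<longrightarrow> (\<exists>r\<in>R. vge v (x - r) 1))) \<and>
     \<comment> \<open>residual characteristic p\<close>
     prime p \<and> vge v (of_nat p) 1"

definition alg_closure_Fp :: "'k::field itself \<Rightarrow> nat \<Rightarrow> bool" where
  "alg_closure_Fp _ p \<longleftrightarrow> prime p \<and> of_nat p = (0::'k) \<and>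
     (\<forall>q :: 'k poly. degree q > 0 \<longrightarrow> (\<exists>x. poly q x = 0)) \<and>
     (\<forall>x :: 'k. \<exists>n>0. x ^ (p ^ n) = x)"

text \<open>(a,b,c,d) stands for the matrix [[a,b],[c,d]].\<close>
type_synonym 'f m2 = "'f \<times> 'f \<times> 'f \<times> 'f"

fun m2mult :: "'f::comm_ring_1 m2 \<Rightarrow> 'f m2 \<Rightarrow> 'f m2" where
  "m2mult (a,b,c,d) (a',b',c',d') =
     (a*a' + b*c', a*b' + b*d', c*a' + d*c', c*b' + d*d')"

fun m2det :: "'f::comm_ring_1 m2 \<Rightarrow> 'f" where
  "m2det (a,b,c,d) = a*d - b*c"

definition m2one :: "'f::comm_ring_1 m2" where
  "m2one = (1,0,0,1)"

definition GL2 :: "'f::field m2 set" where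
  "GL2 = {g. m2det g \<noteq> 0}"

definition Bor :: "'f::field m2 set" where
  "Bor = {(a,b,c,d). c = 0 \<and> a * d \<noteq> 0}"

text \<open>g and h are close: all entries of g - h have valuation \<ge> n (basic neighbourhoods of the
  topology of GL_2(F) as a subspace of F^4).\<close>
fun near :: "('f::field \<Rightarrow> int) \<Rightarrow> int \<Rightarrow> 'f m2 \<Rightarrow> 'f m2 \<Rightarrow> bool" where
  "near v n (a,b,c,d) (a',b',c',d') \<longleftrightarrow>
     vge v (a - a') n \<and> vge v (b - b') n \<and> vge v (c - c') n \<and> vge v (d - d') n"

definition loc_const :: "('f::field \<Rightarrow> int) \<Rightarrow> ('f m2 \<Rightarrow> 'k) \<Rightarrow> bool" where
  "loc_const v f \<longleftrightarrow> (\<forall>g\<in>GL2. \<exists>n. \<forall>h\<in>GL2. near v n h g \<longrightarrow> f h = f g)"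

text \<open>Functions on G are represented as functions on all 2x2 matrices vanishing off GL2.\<close>
definition IndP1 :: "('f::field \<Rightarrow> int) \<Rightarrow> ('f m2 \<Rightarrow> 'k::field) set" where
  "IndP1 v = {f. (\<forall>g. g \<notin> GL2 \<longrightarrow> f g = 0) \<and>
                 (\<forall>b\<in>Bor. \<forall>g\<in>GL2. f (m2mult b g) = f g) \<and> loc_const v f}"

definition oneG :: "'f::field m2 \<Rightarrow> 'k::field" where
  "oneG g = (if g \<in> GL2 then 1 else 0)"

definition rtrans :: "'f::field m2 \<Rightarrow> ('f m2 \<Rightarrow> 'k::field) \<Rightarrow> ('f m2 \<Rightarrow> 'k)" where
  "rtrans g f = (\<lambda>x. if x \<in> GL2 then f (m2mult x g) else 0)"

definition kappa1 :: "('f::field \<Rightarrow> int) \<Rightarrow> ('f m2 \<Rightarrow> 'k::field) set" where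
  "kappa1 v = {f \<in> IndP1 v. f m2one = 0}"

text \<open>Class of f in Sp = Ind / constants (a coset of the line of constants).\<close>
definition sp_class :: "('f::field m2 \<Rightarrow> 'k::field) \<Rightarrow> ('f m2 \<Rightarrow> 'k) set" where
  "sp_class f = {(\<lambda>x. f x + c * oneG x) | c. True}"

definition Sp :: "('f::field \<Rightarrow> int) \<Rightarrow> ('f m2 \<Rightarrow> 'k::field) set set" where
  "Sp v = sp_class ` IndP1 v"

definition smooth_rep :: "('f::field \<Rightarrow> int) \<Rightarrow> ('k::field \<Rightarrow> 'w::ab_group_add \<Rightarrow> 'w)
    \<Rightarrow> ('f m2 \<Rightarrow> 'w \<Rightarrow> 'w) \<Rightarrow> bool" where
  "smooth_rep v scale act \<longleftrightarrow> module scale \<and>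
     (\<forall>g\<in>GL2. \<forall>x y. act g (x + y) = act g x + act g y) \<and>
     (\<forall>g\<in>GL2. \<forall>c x. act g (scale c x) = scale c (act g x)) \<and>
     (\<forall>x. act m2one x = x) \<and>
     (\<forall>g\<in>GL2. \<forall>h\<in>GL2. \<forall>x. act (m2mult g h) x = act g (act h x)) \<and>
     (\<forall>x. \<exists>n. \<forall>g\<in>GL2. near v n g m2one \<longrightarrow> act g x = x)"

definition lin_on :: "('f m2 \<Rightarrow> 'k::field) set \<Rightarrow> ('k \<Rightarrow> 'w::ab_group_add \<Rightarrow> 'w)
    \<Rightarrow> (('f m2 \<Rightarrow> 'k) \<Rightarrow> 'w) \<Rightarrow> bool" where
  "lin_on A scale \<Phi> \<longleftrightarrow>
     (\<forall>f\<in>A. \<forall>g\<in>A. \<Phi> (\<lambda>x. f x + g x) = \<Phi> f + \<Phi> g) \<and>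
     (\<forall>c. \<forall>f\<in>A. \<Phi> (\<lambda>x. c * f x) = scale c (\<Phi> f))"

text \<open>Hom_H(A, pi) for an H-stable subspace A of Ind (maps are 0 outside A).\<close>
definition HomOn :: "'f::field m2 set \<Rightarrow> ('f m2 \<Rightarrow> 'k::field) set \<Rightarrow> ('k \<Rightarrow> 'w::ab_group_add \<Rightarrow> 'w)
    \<Rightarrow> ('f m2 \<Rightarrow> 'w \<Rightarrow> 'w) \<Rightarrow> (('f m2 \<Rightarrow> 'k) \<Rightarrow> 'w) set" where
  "HomOn H A scale act = {\<Phi>. lin_on A scale \<Phi> \<and>
     (\<forall>h\<in>H. \<forall>f\<in>A. \<Phi> (rtrans h f) = act h (\<Phi> f)) \<and> (\<forall>f. f \<notin> A \<longrightarrow> \<Phi> f = 0)}"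

text \<open>Hom_P(Sp, pi), via the universal property of the quotient Sp = Ind / constants:
  P-maps on Ind killing the constants.\<close>
definition HomP_Sp :: "('f::field \<Rightarrow> int) \<Rightarrow> ('k::field \<Rightarrow> 'w::ab_group_add \<Rightarrow> 'w)
    \<Rightarrow> ('f m2 \<Rightarrow> 'w \<Rightarrow> 'w) \<Rightarrow> (('f m2 \<Rightarrow> 'k) \<Rightarrow> 'w) set" where
  "HomP_Sp v scale act = {\<psi> \<in> HomOn Bor (IndP1 v) scale act. \<psi> oneG = 0}"

end

theory Submission
  imports Defs
begin

locale nalf =
  fixes v :: "'f::field \<Rightarrow> int" and p :: nat
  assumes nalf: "nonarch_local_field v p"
begin

lemma vmult: "x \<noteq> 0 \<Longrightarrow> y \<noteq> 0 \<Longrightarrow> v (x * y) = v x + v y"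
  using nalf unfolding nonarch_local_field_def by blast

lemma vultra: "x \<noteq> 0 \<Longrightarrow> y \<noteq> 0 \<Longrightarrow> x + y \<noteq> 0 \<Longrightarrow> v (x + y) \<ge> min (v x) (v y)"
  using nalf unfolding nonarch_local_field_def by blast

lemma unif: "\<exists>u. u \<noteq> 0 \<and> v u = 1"
  using nalf unfolding nonarch_local_field_def by blast

lemma complete: fixes s :: "nat \<Rightarrow> 'f" assumes "\<forall>n. \<exists>N. \<forall>i\<ge>N. \<forall>j\<ge>N. vge v (s i - s j) n"
  shows "\<exists>l. \<forall>n. \<exists>N. \<forall>i\<ge>N. vge v (s i - l) n"
proof -
  note H = nalf[unfolded nonarch_local_field_def, THEN conjunct2, THEN conjunct2, THEN conjunct2, THEN conjunct1]
  show ?thesis using H[THEN spec[of _ s]] assms by (rule mp)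
qed

lemma resid: "\<exists>R. finite R \<and> (\<forall>r\<in>R. vge v r 0) \<and> (\<forall>x. vge v x 0 \<longrightarrow> (\<exists>r\<in>R. vge v (x - r) 1))"
  using nalf unfolding nonarch_local_field_def by blast

lemma v1: "v 1 = 0"
  using vmult[of 1 1] by simp

lemma vinv: "x \<noteq> 0 \<Longrightarrow> v (inverse x) = - v x"
  using vmult[of x "inverse x"] v1 by simp

lemma vm1: "v (-1) = 0"
  using vmult[of "-1" "-1"] v1 by simp

lemma vneg: "x \<noteq> 0 \<Longrightarrow> v (- x) = v x"
  using vmult[of "-1" x] vm1 by simp

lemma vdiv: "x \<noteq> 0 \<Longrightarrow> y \<noteq> 0 \<Longrightarrow> v (x / y) = v x - v y"
  using vmult[of x "inverse y"] vinv[of y] by (simp add: divide_inverse)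

lemma vge0[simp]: "vge v 0 n" by (simp add: vge_def)

lemma vge_nz: "x \<noteq> 0 \<Longrightarrow> vge v x n \<longleftrightarrow> n \<le> v x" by (simp add: vge_def)

lemma vge_mono: "vge v x n \<Longrightarrow> m \<le> n \<Longrightarrow> vge v x m"
  by (auto simp: vge_def)

lemma vge_add: "vge v x n \<Longrightarrow> vge v y n \<Longrightarrow> vge v (x + y) n"
  using vultra[of x y] by (force simp: vge_def)

lemma vge_neg: "vge v (- x) n \<longleftrightarrow> vge v x n"
  by (cases "x = 0") (auto simp: vge_def vneg)

lemma vge_diff: "vge v x n \<Longrightarrow> vge v y n \<Longrightarrow> vge v (x - y) n"
  using vge_add[of x n "-y"] vge_neg[of y n] by simp

lemma vge_diff_sym: "vge v (x - y) n \<longleftrightarrow> vge v (y - x) n"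
  using vge_neg[of "x - y" n] by simp

lemma vge_trans: "vge v (x - y) n \<Longrightarrow> vge v (y - z) n \<Longrightarrow> vge v (x - z) n"
  using vge_add[of "x - y" n "y - z"] by simp

lemma vge_mult: "vge v x n \<Longrightarrow> vge v y m \<Longrightarrow> vge v (x * y) (n + m)"
  by (cases "x = 0"; cases "y = 0") (auto simp: vge_def vmult)

lemma vge_mult_nz: "y \<noteq> 0 \<Longrightarrow> vge v (x * y) n \<longleftrightarrow> vge v x (n - v y)"
  by (cases "x = 0") (auto simp: vge_def vmult)

lemma vge_div_nz: "y \<noteq> 0 \<Longrightarrow> vge v (x / y) n \<longleftrightarrow> vge v x (n + v y)"
  by (cases "x = 0") (auto simp: vge_def vdiv)

lemma v_add_small: assumes "x \<noteq> 0" "vge v e (v x + 1)"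
  shows "x + e \<noteq> 0 \<and> v (x + e) = v x"
proof (cases "e = 0")
  case True then show ?thesis using assms by simp
next
  case False
  then have ve: "v e \<ge> v x + 1" using assms by (simp add: vge_def)
  have ne: "x + e \<noteq> 0"
  proof
    assume "x + e = 0" then have "e = - x" by (simp add: add_eq_0_iff2)
    then have "v e = v x" using vneg assms by simp
    then show False using ve by simp
  qed
  have "v (x + e) \<ge> v x" using vultra[OF assms(1) False ne] ve by simp
  moreover have "v x \<ge> v (x + e)"
  proof -
    have "x = (x + e) + (- e)" by simp
    then have "v x \<ge> min (v (x + e)) (v (- e))"
      using vultra[OF ne, of "- e"] assms(1) False by simp
    then show ?thesis using vneg[OF False] ve by simp
  qed
  ultimately show ?thesis using ne by simp
qed

lemma exists_val: "\<exists>x. x \<noteq> 0 \<and> v x = k"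
proof -
  obtain u where u: "u \<noteq> 0" "v u = 1" using unif by blast
  have pw: "u ^ n \<noteq> 0 \<and> v (u ^ n) = int n" for n
    by (induction n) (auto simp: v1 vmult u)
  show ?thesis
  proof (cases "k \<ge> 0")
    case True then show ?thesis using pw[of "nat k"] by (intro exI[of _ "u ^ nat k"]) simp
  next
    case False then show ?thesis using pw[of "nat (-k)"] vinv
      by (intro exI[of _ "inverse (u ^ nat (-k))"]) simp
  qed
qed

definition pw :: "int \<Rightarrow> 'f" where "pw k = (SOME x. x \<noteq> 0 \<and> v x = k)"

lemma pw: "pw k \<noteq> 0" "v (pw k) = k"
  using someI_ex[OF exists_val[of k]] unfolding pw_def by auto

end

lemma m2mult_simp[simp]: "m2mult (a,b,c,d) (a',b',c',d') =
     (a*a' + b*c', a*b' + b*d', c*a' + d*c', c*b' + d*d')" by simp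

lemma m2mult_assoc: "m2mult (m2mult x y) z = m2mult x (m2mult (y::'f::comm_ring_1 m2) z)"
  by (cases x rule: prod_cases4; cases y rule: prod_cases4; cases z rule: prod_cases4)
     (simp add: algebra_simps)

lemma m2det_mult: "m2det (m2mult x y) = m2det x * m2det (y::'f::comm_ring_1 m2)"
  by (cases x rule: prod_cases4; cases y rule: prod_cases4) (simp add: algebra_simps)

lemma m2one_left[simp]: "m2mult m2one x = (x::'f::comm_ring_1 m2)"
  by (cases x rule: prod_cases4) (simp add: m2one_def)

lemma m2one_right[simp]: "m2mult x m2one = (x::'f::comm_ring_1 m2)"
  by (cases x rule: prod_cases4) (simp add: m2one_def)

lemma GL2_iff: "(a,b,c,d) \<in> GL2 \<longleftrightarrow> a*d - b*c \<noteq> (0::'f::field)"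
  by (simp add: GL2_def)

lemma GL2_mult: "x \<in> GL2 \<Longrightarrow> y \<in> GL2 \<Longrightarrow> m2mult x y \<in> (GL2::'f::field m2 set)"
  by (simp add: GL2_def m2det_mult)

lemma one_GL2[simp]: "m2one \<in> (GL2::'f::field m2 set)"
  by (simp add: GL2_def m2one_def)

lemma Bor_iff: "(a,b,c,d) \<in> Bor \<longleftrightarrow> c = 0 \<and> a * d \<noteq> (0::'f::field)"
  by (simp add: Bor_def)

lemma Bor_GL2: "x \<in> Bor \<Longrightarrow> x \<in> (GL2::'f::field m2 set)"
  by (cases x rule: prod_cases4) (simp add: Bor_def GL2_def)

lemma one_Bor[simp]: "m2one \<in> (Bor::'f::field m2 set)"
  by (simp add: Bor_def m2one_def)

definition minv :: "'f::field m2 \<Rightarrow> 'f m2" where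
  "minv x = (case x of (a,b,c,d) \<Rightarrow> (d * inverse (a*d-b*c), - b * inverse (a*d-b*c),
      - c * inverse (a*d-b*c), a * inverse (a*d-b*c)))"

lemma minv_right: "x \<in> GL2 \<Longrightarrow> m2mult x (minv x) = m2one"
proof -
  assume G: "x \<in> GL2"
  obtain a b c d where 1: "x = (a,b,c,d)" by (cases x rule: prod_cases4)
  from G have D: "(a*d-b*c) * inverse (a*d-b*c) = 1" using 1 by (simp add: GL2_def)
  show ?thesis unfolding 1 minv_def m2one_def using D by simp algebra
qed

lemma minv_left: "x \<in> GL2 \<Longrightarrow> m2mult (minv x) x = m2one"
proof -
  assume G: "x \<in> GL2"
  obtain a b c d where 1: "x = (a,b,c,d)" by (cases x rule: prod_cases4)
  from G have D: "(a*d-b*c) * inverse (a*d-b*c) = 1" using 1 by (simp add: GL2_def)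
  show ?thesis unfolding 1 minv_def m2one_def using D by simp algebra
qed

lemma minv_GL2: "x \<in> GL2 \<Longrightarrow> minv x \<in> GL2"
  using m2det_mult[of x "minv x"] minv_right[of x] by (auto simp: GL2_def m2one_def)

lemma rtrans_app: "x \<in> GL2 \<Longrightarrow> rtrans g f x = f (m2mult x g)"
  by (simp add: rtrans_def)

lemma rtrans_out: "x \<notin> GL2 \<Longrightarrow> rtrans g f x = 0"
  by (simp add: rtrans_def)

lemma rtrans_comp: "g \<in> GL2 \<Longrightarrow> rtrans g (rtrans h f) = rtrans (m2mult g h) (f::'f::field m2 \<Rightarrow> 'k::field)"
  by (rule ext) (simp add: rtrans_def GL2_mult m2mult_assoc)

lemma rtrans_one: "(\<And>x. x \<notin> GL2 \<Longrightarrow> f x = 0) \<Longrightarrow> rtrans m2one (f::'f::field m2 \<Rightarrow> 'k::field) = f"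
  by (rule ext) (simp add: rtrans_def)

lemma rtrans_add: "rtrans g (\<lambda>x. f x + h x) = (\<lambda>x. rtrans g f x + rtrans g h x)"
  by (rule ext) (simp add: rtrans_def)

lemma rtrans_diff: "rtrans g (\<lambda>x. f x - h x) = (\<lambda>x. rtrans g f x - rtrans g h x)"
  by (rule ext) (simp add: rtrans_def)

lemma rtrans_mult: "rtrans g (\<lambda>x. f x * h x) = (\<lambda>x. rtrans g f x * rtrans g h x)"
  by (rule ext) (simp add: rtrans_def)

lemma rtrans_scal: "rtrans g (\<lambda>x. c * f x) = (\<lambda>x. c * rtrans g f x)"
  by (rule ext) (simp add: rtrans_def)

lemma rtrans_zero: "rtrans g (\<lambda>x. 0) = (\<lambda>x. 0)"
  by (rule ext) (simp add: rtrans_def)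

lemma rtrans_oneG: "g \<in> GL2 \<Longrightarrow> rtrans g oneG = oneG"
  by (rule ext) (simp add: rtrans_def oneG_def GL2_mult)

context nalf begin

lemma near_simp[simp]: "near v n (a,b,c,d) (a',b',c',d') \<longleftrightarrow>
     vge v (a - a') n \<and> vge v (b - b') n \<and> vge v (c - c') n \<and> vge v (d - d') n" by simp

lemma near_mono: "near v n h g \<Longrightarrow> m \<le> n \<Longrightarrow> near v m h g"
  by (cases h rule: prod_cases4; cases g rule: prod_cases4) (auto intro: vge_mono)

lemma near_refl[simp]: "near v n g g"
  by (cases g rule: prod_cases4) auto

lemma Ind_iff: "f \<in> IndP1 v \<longleftrightarrow> (\<forall>g. g \<notin> GL2 \<longrightarrow> f g = 0) \<and>
                 (\<forall>b\<in>Bor. \<forall>g\<in>GL2. f (m2mult b g) = f g) \<and> loc_const v f"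
  by (simp add: IndP1_def)

lemma Ind_out: "f \<in> IndP1 v \<Longrightarrow> g \<notin> GL2 \<Longrightarrow> f g = 0"
  unfolding IndP1_def by blast

lemma Ind_left: "f \<in> IndP1 v \<Longrightarrow> b \<in> Bor \<Longrightarrow> g \<in> GL2 \<Longrightarrow> f (m2mult b g) = f g"
  by (simp add: IndP1_def)

lemma Ind_lc: "f \<in> IndP1 v \<Longrightarrow> g \<in> GL2 \<Longrightarrow> \<exists>n. \<forall>h\<in>GL2. near v n h g \<longrightarrow> f h = f g"
  by (simp add: IndP1_def loc_const_def)

lemma Ind_bin:
  assumes "f \<in> IndP1 v" "h \<in> IndP1 v" "\<And>a b. F a b = 0 \<or> True" "F 0 0 = 0"
  shows "(\<lambda>x. F (f x) (h x)) \<in> IndP1 v"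
proof -
  have lc: "loc_const v (\<lambda>x. F (f x) (h x))"
    unfolding loc_const_def
  proof
    fix g :: "'f m2" assume g: "g \<in> GL2"
    obtain n1 where n1: "\<forall>y\<in>GL2. near v n1 y g \<longrightarrow> f y = f g" using Ind_lc[OF assms(1) g] by blast
    obtain n2 where n2: "\<forall>y\<in>GL2. near v n2 y g \<longrightarrow> h y = h g" using Ind_lc[OF assms(2) g] by blast
    show "\<exists>n. \<forall>y\<in>GL2. near v n y g \<longrightarrow> F (f y) (h y) = F (f g) (h g)"
      by (rule exI[of _ "max n1 n2"]) (metis n1 n2 near_mono max.cobounded1 max.cobounded2)
  qed
  show ?thesis using assms lc by (simp add: IndP1_def)
qed

lemma Ind_add: "f \<in> IndP1 v \<Longrightarrow> h \<in> IndP1 v \<Longrightarrow> (\<lambda>x. f x + h x) \<in> IndP1 v"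
  using Ind_bin[of f h "\<lambda>a b. a + b"] by simp

lemma Ind_diff: "f \<in> IndP1 v \<Longrightarrow> h \<in> IndP1 v \<Longrightarrow> (\<lambda>x. f x - h x) \<in> IndP1 v"
  using Ind_bin[of f h "\<lambda>a b. a - b"] by simp

lemma Ind_mult: "f \<in> IndP1 v \<Longrightarrow> h \<in> IndP1 v \<Longrightarrow> (\<lambda>x. f x * h x) \<in> IndP1 v"
  using Ind_bin[of f h "\<lambda>a b. a * b"] by simp

lemma Ind_scal: "f \<in> IndP1 v \<Longrightarrow> (\<lambda>x. c * f x) \<in> IndP1 v"
  using Ind_bin[of f f "\<lambda>a b. c * a"] by simp

lemma oneG_Ind: "oneG \<in> IndP1 v"
  by (auto simp: IndP1_def oneG_def loc_const_def GL2_mult Bor_GL2)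

lemma zero_Ind: "(\<lambda>x. 0) \<in> IndP1 v"
  by (auto simp: IndP1_def loc_const_def)

lemma near_rmult:
  assumes "near v n x y" "vge v p1 M" "vge v q1 M" "vge v r1 M" "vge v s1 M"
  shows "near v (n + M) (m2mult x (p1,q1,r1,s1)) (m2mult y (p1,q1,r1,s1))"
proof -
  obtain a b c d where x: "x = (a,b,c,d)" by (cases x rule: prod_cases4)
  obtain a' b' c' d' where y: "y = (a',b',c',d')" by (cases y rule: prod_cases4)
  have h: "vge v (a - a') n" "vge v (b - b') n" "vge v (c - c') n" "vge v (d - d') n"
    using assms(1) x y by auto
  have e1: "a * p1 + b * r1 - (a' * p1 + b' * r1) = (a - a') * p1 + (b - b') * r1" by (simp add: algebra_simps)
  have e2: "a * q1 + b * s1 - (a' * q1 + b' * s1) = (a - a') * q1 + (b - b') * s1" by (simp add: algebra_simps)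
  have e3: "c * p1 + d * r1 - (c' * p1 + d' * r1) = (c - c') * p1 + (d - d') * r1" by (simp add: algebra_simps)
  have e4: "c * q1 + d * s1 - (c' * q1 + d' * s1) = (c - c') * q1 + (d - d') * s1" by (simp add: algebra_simps)
  show ?thesis unfolding x y m2mult_simp near_simp e1 e2 e3 e4
    using h assms(2-5) by (intro conjI vge_add vge_mult) 
qed

lemma Ind_rtrans:
  assumes f: "f \<in> IndP1 v" and g: "g \<in> GL2"
  shows "rtrans g f \<in> IndP1 v"
proof -
  obtain p1 q1 r1 s1 where gg: "g = (p1,q1,r1,s1)" by (cases g rule: prod_cases4)
  define M where "M = min (min (v p1) (v q1)) (min (v r1) (v s1))"
  have M: "vge v p1 M" "vge v q1 M" "vge v r1 M" "vge v s1 M" unfolding vge_def M_def by auto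
  have lc: "loc_const v (rtrans g f)"
    unfolding loc_const_def
  proof
    fix x :: "'f m2" assume x: "x \<in> GL2"
    have xg: "m2mult x g \<in> GL2" using GL2_mult[OF x g] .
    obtain n where n: "\<forall>y\<in>GL2. near v n y (m2mult x g) \<longrightarrow> f y = f (m2mult x g)"
      using Ind_lc[OF f xg] by blast
    show "\<exists>n. \<forall>y\<in>GL2. near v n y x \<longrightarrow> rtrans g f y = rtrans g f x"
    proof (intro exI[of _ "n - M"] ballI impI)
      fix y :: "'f m2" assume y: "y \<in> GL2" "near v (n - M) y x"
      have "near v (n - M + M) (m2mult y g) (m2mult x g)"
        unfolding gg by (rule near_rmult[OF y(2) M])
      then have "f (m2mult y g) = f (m2mult x g)" using n GL2_mult[OF y(1) g] by simp
      then show "rtrans g f y = rtrans g f x" using x y by (simp add: rtrans_app)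
    qed
  qed
  have inv: "\<forall>b\<in>Bor. \<forall>y\<in>GL2. rtrans g f (m2mult b y) = rtrans g f y"
    using Ind_left[OF f] by (simp add: rtrans_app GL2_mult Bor_GL2 g m2mult_assoc)
  show ?thesis using lc inv by (simp add: IndP1_def rtrans_out)
qed

end

context nalf begin

definition inball :: "'f \<Rightarrow> int \<Rightarrow> 'f m2 \<Rightarrow> bool" where
  "inball \<beta> k x = (case x of (a,b,c,d) \<Rightarrow> c \<noteq> 0 \<and> vge v (d/c - \<beta>) k)"

definition ballf :: "'f \<Rightarrow> int \<Rightarrow> 'f m2 \<Rightarrow> 'k::field" where
  "ballf \<beta> k x = (if x \<in> GL2 \<and> inball \<beta> k x then 1 else 0)"

lemma inball_simp[simp]: "inball \<beta> k (a,b,c,d) \<longleftrightarrow> c \<noteq> 0 \<and> vge v (d/c - \<beta>) k"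
  by (simp add: inball_def)


lemma in00: "c \<noteq> 0 \<Longrightarrow> vge v (d/c - 0) 0 \<longleftrightarrow> vge v d (v c)"
  using vge_div_nz[of c d 0] by simp

definition Ymat :: "'f \<Rightarrow> 'f m2" where "Ymat y = (0, 1, 1, y)"

lemma Ymat_GL2: "Ymat y \<in> GL2" by (simp add: Ymat_def GL2_def)

lemma near_Ymat: "near v n (Ymat y) (Ymat y0) \<longleftrightarrow> vge v (y - y0) n"
  by (simp add: Ymat_def)

definition aB :: "'f \<Rightarrow> int \<Rightarrow> 'f m2" where "aB \<beta> k = (pw k, - \<beta>, 0, 1)"

lemma aB_Bor: "aB \<beta> k \<in> Bor" using pw by (simp add: aB_def Bor_def)
lemma eO_lc_pt:
  assumes g: "(a,b,c,d) \<in> GL2"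
  shows "\<exists>n. \<forall>h. near v n h (a,b,c,d) \<longrightarrow> (inball 0 0 h \<longleftrightarrow> inball 0 0 (a,b,c,d))"
proof (cases "c = 0")
  case True
  then have d: "d \<noteq> 0" using g by (simp add: GL2_def)
  show ?thesis
  proof (intro exI[of _ "v d + 1"] allI impI)
    fix h :: "'f m2" assume nh: "near v (v d + 1) h (a,b,c,d)"
    obtain a' b' c' d' where hh: "h = (a',b',c',d')" by (cases h rule: prod_cases4)
    have c': "vge v c' (v d + 1)" using nh hh True by simp
    have "vge v (d' - d) (v d + 1)" using nh hh by simp
    then have d': "d' \<noteq> 0" "v d' = v d" using v_add_small[OF d, of "d' - d"] by auto
    have "\<not> inball 0 0 h"
    proof
      assume "inball 0 0 h"
      then have "c' \<noteq> 0" "vge v d' (v c')" using hh in00 by auto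
      then show False using c' d' by (simp add: vge_def)
    qed
    then show "inball 0 0 h \<longleftrightarrow> inball 0 0 (a,b,c,d)" using True by simp
  qed
next
  case False
  show ?thesis
  proof (intro exI[of _ "v c + 1"] allI impI)
    fix h :: "'f m2" assume nh: "near v (v c + 1) h (a,b,c,d)"
    obtain a' b' c' d' where hh: "h = (a',b',c',d')" by (cases h rule: prod_cases4)
    have "vge v (c' - c) (v c + 1)" using nh hh by simp
    then have c': "c' \<noteq> 0" "v c' = v c" using v_add_small[OF False, of "c' - c"] by auto
    have dd: "vge v (d' - d) (v c + 1)" using nh hh by simp
    show "inball 0 0 h \<longleftrightarrow> inball 0 0 (a,b,c,d)"
    proof (cases "vge v d (v c)")
      case True
      have "vge v (d + (d' - d)) (v c)" using vge_add[OF True vge_mono[OF dd]] by simp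
      then have "vge v d' (v c')" using c' by simp
      then show ?thesis using True c' False hh in00 by simp
    next
      case F2: False
      then have d: "d \<noteq> 0" "v d < v c" by (auto simp: vge_def)
      have "d' = d + (d' - d)" by simp
      moreover have "vge v (d' - d) (v d + 1)" using dd d vge_mono by fastforce
      ultimately have d': "d' \<noteq> 0" "v d' = v d" using v_add_small[OF d(1), of "d' - d"] by auto
      have "\<not> vge v d' (v c')" using d' c' d by (simp add: vge_def)
      then show ?thesis using F2 c' False hh in00 by simp
    qed
  qed
qed

lemma eO_Ind: "(ballf 0 0 :: 'f m2 \<Rightarrow> 'k::field) \<in> IndP1 v"
proof -
  have lc: "loc_const v (ballf 0 0 :: 'f m2 \<Rightarrow> 'k)"
    unfolding loc_const_def
  proof
    fix g :: "'f m2" assume g: "g \<in> GL2"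
    obtain a b c d where gg: "g = (a,b,c,d)" by (cases g rule: prod_cases4)
    obtain n where n: "\<forall>h. near v n h g \<longrightarrow> (inball 0 0 h \<longleftrightarrow> inball 0 0 g)"
      using eO_lc_pt[of a b c d] g gg by blast
    show "\<exists>n. \<forall>h\<in>GL2. near v n h g \<longrightarrow> (ballf 0 0 h :: 'k) = ballf 0 0 g"
    proof (intro exI[of _ n] ballI impI)
      fix h :: "'f m2" assume h: "h \<in> GL2" "near v n h g"
      then have "inball 0 0 h \<longleftrightarrow> inball 0 0 g" using n by blast
      then show "(ballf 0 0 h :: 'k) = ballf 0 0 g" using g h(1) unfolding ballf_def by simp
    qed
  qed
  have inv: "\<forall>b\<in>Bor. \<forall>g\<in>GL2. (ballf 0 0 (m2mult b g) :: 'k) = ballf 0 0 g"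
  proof (intro ballI)
    fix b g :: "'f m2" assume b: "b \<in> Bor" and g: "g \<in> GL2"
    obtain p1 q1 r1 s1 where bb: "b = (p1,q1,r1,s1)" by (cases b rule: prod_cases4)
    obtain a' b' c' d' where gg: "g = (a',b',c',d')" by (cases g rule: prod_cases4)
    have r1: "r1 = 0" "s1 \<noteq> 0" "p1 \<noteq> 0" using b bb by (auto simp: Bor_def)
    have "inball 0 0 (m2mult b g) \<longleftrightarrow> inball 0 0 g"
      using r1 unfolding bb gg by simp
    then show "(ballf 0 0 (m2mult b g) :: 'k) = ballf 0 0 g" using GL2_mult[OF Bor_GL2[OF b] g] g
      by (simp add: ballf_def)
  qed
  show ?thesis unfolding IndP1_def using lc inv by (auto simp: ballf_def)
qed

lemma lines:
  assumes f: "f \<in> IndP1 v" and x: "(a,b,c,d) \<in> GL2" and c: "c \<noteq> 0"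
  shows "f (a,b,c,d) = f (Ymat (d/c))"
proof -
  have B: "(b - a*d/c, a, 0, c) \<in> Bor"
  proof -
    have "(b - a*d/c) * c = b*c - a*d" using c by (simp add: field_simps)
    then show ?thesis using x c by (auto simp: Bor_def GL2_def)
  qed
  have "m2mult (b - a*d/c, a, 0, c) (Ymat (d/c)) = (a,b,c,d)"
    using c by (simp add: Ymat_def field_simps)
  then show ?thesis using Ind_left[OF f B Ymat_GL2[of "d/c"]] by simp
qed

lemma lines0:
  assumes f: "f \<in> IndP1 v" and x: "(a,b,0,d) \<in> GL2"
  shows "f (a,b,0,d) = f m2one"
proof -
  have B: "(a,b,0,d) \<in> Bor" using x by (simp add: Bor_def GL2_def)
  show ?thesis using Ind_left[OF f B one_GL2] by simp
qed

lemma ballf_rtrans: "(ballf \<beta> k :: 'f m2 \<Rightarrow> 'k::field) = rtrans (aB \<beta> k) (ballf 0 0)"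
proof (rule ext)
  fix x :: "'f m2"
  obtain a b c d where xx: "x = (a,b,c,d)" by (cases x rule: prod_cases4)
  show "(ballf \<beta> k x :: 'k) = rtrans (aB \<beta> k) (ballf 0 0) x"
  proof (cases "x \<in> GL2")
    case True
    have G: "m2mult x (aB \<beta> k) \<in> GL2" using GL2_mult[OF True Bor_GL2[OF aB_Bor]] .
    have "inball 0 0 (m2mult x (aB \<beta> k)) \<longleftrightarrow> inball \<beta> k x"
    proof (cases "c = 0")
      case True then show ?thesis using pw xx by (simp add: aB_def)
    next
      case False
      have e: "(- (c * \<beta>) + d) / (c * pw k) - 0 = (d / c - \<beta>) / pw k"
        using False pw by (simp add: field_simps)
      have e2: "d / c - \<beta> = (d - c * \<beta>) / c" using False by (simp add: field_simps)
      have A: "vge v (d/c - \<beta>) k \<longleftrightarrow> vge v (d - c*\<beta>) (k + v c)"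
        using vge_div_nz[OF False, of "d - c*\<beta>" k] e2 by simp
      have B: "v (c * pw k) = v c + k" using vmult[OF False pw(1)] pw(2) by simp
      show ?thesis using False pw unfolding xx aB_def
        by (simp add: e vge_div_nz A B add.commute)
    qed
    then show ?thesis using True G by (simp add: ballf_def rtrans_app)
  next
    case False then show ?thesis by (simp add: ballf_def rtrans_out)
  qed
qed

lemma ballf_Ind: "(ballf \<beta> k :: 'f m2 \<Rightarrow> 'k::field) \<in> IndP1 v"
proof -
  have "rtrans (aB \<beta> k) (ballf 0 0 :: 'f m2 \<Rightarrow> 'k) \<in> IndP1 v"
    by (rule Ind_rtrans[OF eO_Ind Bor_GL2[OF aB_Bor]])
  then show ?thesis by (simp only: ballf_rtrans[of \<beta> k, symmetric])
qed

lemma nn_eO: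
  assumes e: "vge v \<epsilon> 1"
  shows "rtrans (1, 0, \<epsilon>, 1) (ballf 0 0 :: 'f m2 \<Rightarrow> 'k::field) = ballf 0 0"
proof (rule ext)
  fix x :: "'f m2"
  obtain a b c d where xx: "x = (a,b,c,d)" by (cases x rule: prod_cases4)
  have nG: "(1, 0, \<epsilon>, 1) \<in> GL2" by (simp add: GL2_def)
  show "rtrans (1, 0, \<epsilon>, 1) (ballf 0 0) x = (ballf 0 0 x :: 'k)"
  proof (cases "x \<in> GL2")
    case G: True
    have G2: "m2mult x (1, 0, \<epsilon>, 1) \<in> GL2" using GL2_mult[OF G nG] .
    have m: "m2mult x (1, 0, \<epsilon>, 1) = (a + b * \<epsilon>, b, c + d * \<epsilon>, d)" unfolding xx by simp
    have "inball 0 0 (a + b * \<epsilon>, b, c + d * \<epsilon>, d) \<longleftrightarrow> inball 0 0 (a,b,c,d)"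
    proof (cases "c \<noteq> 0 \<and> vge v d (v c)")
      case True
      have "vge v (d * \<epsilon>) (v c + 1)" using vge_mult[OF conjunct2[OF True] e] .
      then have "c + d * \<epsilon> \<noteq> 0 \<and> v (c + d * \<epsilon>) = v c" using v_add_small[of c "d * \<epsilon>"] True by blast
      then show ?thesis using True in00 by simp
    next
      case False
      have d: "d \<noteq> 0" using False G xx by (auto simp: GL2_def vge_def)
      have cc: "vge v c (v d + 1)" using False d by (auto simp: vge_def)
      have "vge v (d * \<epsilon>) (v d + 1)" using vge_mult[OF vge_nz[OF d, THEN iffD2, OF order_refl] e] .
      then have s: "vge v (c + d * \<epsilon>) (v d + 1)" using vge_add[OF cc] by blast
      have "\<not> (c + d * \<epsilon> \<noteq> 0 \<and> vge v d (v (c + d * \<epsilon>)))"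
        using s d by (auto simp: vge_def)
      then show ?thesis using False in00 by auto
    qed
    then show ?thesis using G G2 m xx by (simp add: ballf_def rtrans_app)
  next
    case False then show ?thesis by (simp add: ballf_def rtrans_out)
  qed
qed

end

context nalf begin

lemma ball_induct:
  fixes Q :: "'f \<Rightarrow> int \<Rightarrow> bool"
  assumes Rint: "\<forall>r\<in>R. vge v r 0"
  and cong: "\<And>\<beta> \<beta>' k. vge v (\<beta> - \<beta>') k \<Longrightarrow> Q \<beta> k \<Longrightarrow> Q \<beta>' k"
  and split: "\<And>\<beta> k. (\<forall>r\<in>R. Q (\<beta> + pw k * r) (k+1)) \<Longrightarrow> Q \<beta> k"
  and loc: "\<And>y. vge v (y - \<beta>0) k0 \<Longrightarrow> \<exists>n. \<forall>k\<ge>n. Q y k"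
  shows "Q \<beta>0 k0"
proof (rule ccontr)
  assume nQ: "\<not> Q \<beta>0 k0"
  define step where "step = (\<lambda>\<beta> (j::nat). (SOME \<beta>'. \<exists>r\<in>R. \<beta>' = \<beta> + pw (k0 + int j) * r \<and> \<not> Q \<beta>' (k0 + int j + 1)))"
  define c where "c = rec_nat \<beta>0 (\<lambda>j cj. step cj j)"
  have c0: "c 0 = \<beta>0" by (simp add: c_def)
  have cS: "c (Suc j) = step (c j) j" for j by (simp add: c_def)
  have inv: "\<not> Q (c j) (k0 + int j) \<and> (\<exists>r\<in>R. c (Suc j) = c j + pw (k0 + int j) * r)" for j
  proof (induction j)
    case 0
    have ex: "\<exists>\<beta>'. \<exists>r\<in>R. \<beta>' = c 0 + pw (k0 + int 0) * r \<and> \<not> Q \<beta>' (k0 + int 0 + 1)"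
      using split[of "c 0" "k0 + int 0"] nQ c0 by auto
    have "\<exists>r\<in>R. c (Suc 0) = c 0 + pw (k0 + int 0) * r \<and> \<not> Q (c (Suc 0)) (k0 + int 0 + 1)"
      using someI_ex[OF ex] unfolding cS step_def by simp
    then show ?case using nQ c0 by auto
  next
    case (Suc j)
    have ex0: "\<exists>\<beta>'. \<exists>r\<in>R. \<beta>' = c j + pw (k0 + int j) * r \<and> \<not> Q \<beta>' (k0 + int j + 1)"
      using split[of "c j" "k0 + int j"] Suc.IH by auto
    have h0: "\<exists>r\<in>R. c (Suc j) = c j + pw (k0 + int j) * r \<and> \<not> Q (c (Suc j)) (k0 + int j + 1)"
      using someI_ex[OF ex0] unfolding cS step_def by simp
    moreover have "k0 + int j + 1 = k0 + int (Suc j)" by simp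
    ultimately have nq: "\<not> Q (c (Suc j)) (k0 + int (Suc j))" by metis
    have ex: "\<exists>\<beta>'. \<exists>r\<in>R. \<beta>' = c (Suc j) + pw (k0 + int (Suc j)) * r \<and> \<not> Q \<beta>' (k0 + int (Suc j) + 1)"
      using split[of "c (Suc j)" "k0 + int (Suc j)"] nq by auto
    have "\<exists>r\<in>R. c (Suc (Suc j)) = c (Suc j) + pw (k0 + int (Suc j)) * r"
      using someI_ex[OF ex] unfolding cS[of "Suc j"] step_def by auto
    then show ?case using nq by blast
  qed
  have d1: "vge v (c (Suc j) - c j) (k0 + int j)" for j
  proof -
    obtain r where r: "r \<in> R" "c (Suc j) = c j + pw (k0 + int j) * r" using inv[of j] by blast
    have "vge v (pw (k0 + int j) * r) (k0 + int j + 0)"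
      using vge_mult[of "pw (k0 + int j)" "k0 + int j" r 0] pw Rint r(1) by (simp add: vge_def)
    then show ?thesis using r(2) by simp
  qed
  have dt: "vge v (c (j + t) - c j) (k0 + int j)" for j t
  proof (induction t)
    case 0 then show ?case by simp
  next
    case (Suc t)
    have "vge v (c (Suc (j + t)) - c (j + t)) (k0 + int j)"
      using vge_mono[OF d1[of "j + t"]] by simp
    then have "vge v ((c (Suc (j + t)) - c (j + t)) + (c (j + t) - c j)) (k0 + int j)"
      using vge_add Suc.IH by blast
    then show ?case by simp
  qed
  have dij: "i \<ge> j \<Longrightarrow> vge v (c i - c j) (k0 + int j)" for i j
    using dt[of j "i - j"] by simp
  have cauchy: "\<forall>n. \<exists>N. \<forall>i\<ge>N. \<forall>j\<ge>N. vge v (c i - c j) n"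
  proof
    fix n
    show "\<exists>N. \<forall>i\<ge>N. \<forall>j\<ge>N. vge v (c i - c j) n"
    proof (intro exI[of _ "nat (n - k0)"] allI impI)
      fix i j assume i: "i \<ge> nat (n - k0)" and j: "j \<ge> nat (n - k0)"
      have a: "vge v (c i - c (nat (n - k0))) n" using vge_mono[OF dij[OF i]] by simp
      have b: "vge v (c j - c (nat (n - k0))) n" using vge_mono[OF dij[OF j]] by simp
      show "vge v (c i - c j) n" using vge_diff[OF a b] by simp
    qed
  qed
  obtain l where l: "\<forall>n. \<exists>N. \<forall>i\<ge>N. vge v (c i - l) n" using complete[OF cauchy] by blast
  have cl: "vge v (c j - l) (k0 + int j)" for j
  proof -
    obtain N where N: "\<forall>i\<ge>N. vge v (c i - l) (k0 + int j)" using l by blast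
    have a: "vge v (c (max N j) - l) (k0 + int j)" using N by simp
    have b: "vge v (c (max N j) - c j) (k0 + int j)" using dij[of j "max N j"] by simp
    show ?thesis using vge_diff[OF a b] by simp
  qed
  have lin: "vge v (l - \<beta>0) k0" using cl[of 0] c0 vge_diff_sym by simp
  obtain n where n: "\<forall>k\<ge>n. Q l k" using loc[OF lin] by blast
  have "Q l (k0 + int (nat (n - k0)))" using n by simp
  then have "Q (c (nat (n - k0))) (k0 + int (nat (n - k0)))"
    using cong cl[of "nat (n - k0)"] vge_diff_sym by blast
  then show False using inv by blast
qed

end

definition sS :: "'f::field m2" where "sS = (0, 1, 1, 0)"

lemma sS_GL2[simp]: "sS \<in> GL2" by (simp add: sS_def GL2_def)

lemma sS_sS: "m2mult sS sS = (m2one :: 'f::field m2)" by (simp add: sS_def m2one_def)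

locale rep = nalf v p for v :: "'f::field \<Rightarrow> int" and p +
  fixes scale :: "'k::field \<Rightarrow> 'w::ab_group_add \<Rightarrow> 'w" and act :: "'f m2 \<Rightarrow> 'w \<Rightarrow> 'w"
  assumes rep: "smooth_rep v scale act"
begin

lemma modS: "module scale" using rep by (simp add: smooth_rep_def)

lemma act_add: "g \<in> GL2 \<Longrightarrow> act g (x + y) = act g x + act g y"
  using rep by (simp add: smooth_rep_def)

lemma act_scal: "g \<in> GL2 \<Longrightarrow> act g (scale c x) = scale c (act g x)"
  using rep by (simp add: smooth_rep_def)

lemma act_one[simp]: "act m2one x = x"
  using rep by (simp add: smooth_rep_def)

lemma act_mult: "g \<in> GL2 \<Longrightarrow> h \<in> GL2 \<Longrightarrow> act (m2mult g h) x = act g (act h x)"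
  using rep unfolding smooth_rep_def by blast

lemma act_smooth: "\<exists>n. \<forall>g\<in>GL2. near v n g m2one \<longrightarrow> act g x = x"
  using rep unfolding smooth_rep_def by blast

lemma act_zero: "g \<in> GL2 \<Longrightarrow> act g 0 = 0"
  using act_add[of g 0 0] by simp

lemma act_inv1: "a \<in> GL2 \<Longrightarrow> act a (act (minv a) z) = z"
  using act_mult[of a "minv a" z] minv_GL2[of a] minv_right[of a] by simp

lemma act_inv2: "a \<in> GL2 \<Longrightarrow> act (minv a) (act a z) = z"
  using act_mult[of "minv a" a z] minv_GL2[of a] minv_left[of a] by simp

lemma scale_zero: "scale c 0 = 0"
  using module.scale_zero_right[OF modS] by blast

lemma kap_iff: "f \<in> kappa1 v \<longleftrightarrow> f \<in> IndP1 v \<and> f m2one = 0"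
  by (simp add: kappa1_def)

lemma rtrans_kap: "f \<in> IndP1 v \<Longrightarrow> g \<in> GL2 \<Longrightarrow> f g = 0 \<Longrightarrow> rtrans g f \<in> kappa1 v"
  by (simp add: kap_iff Ind_rtrans rtrans_app)

lemma rtrans_at_one: "rtrans g f m2one = f g"
  by (simp add: rtrans_app)

end

locale psictx = rep v p scale act
  for v :: "'f::field \<Rightarrow> int" and p and scale :: "'k::field \<Rightarrow> 'w::ab_group_add \<Rightarrow> 'w"
  and act :: "'f m2 \<Rightarrow> 'w \<Rightarrow> 'w" +
  fixes psi :: "('f m2 \<Rightarrow> 'k) \<Rightarrow> 'w"
  assumes psi: "psi \<in> HomOn Bor (kappa1 v) scale act"
begin

lemma psi_add: "f \<in> kappa1 v \<Longrightarrow> g \<in> kappa1 v \<Longrightarrow> psi (\<lambda>x. f x + g x) = psi f + psi g"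
  using psi unfolding HomOn_def lin_on_def by blast

lemma psi_scal: "f \<in> kappa1 v \<Longrightarrow> psi (\<lambda>x. c * f x) = scale c (psi f)"
  using psi unfolding HomOn_def lin_on_def by blast

lemma psi_eq: "b \<in> Bor \<Longrightarrow> f \<in> kappa1 v \<Longrightarrow> psi (rtrans b f) = act b (psi f)"
  using psi unfolding HomOn_def by blast

lemma psi_out: "f \<notin> kappa1 v \<Longrightarrow> psi f = 0"
  using psi unfolding HomOn_def by blast

lemma zero_kap: "(\<lambda>x. 0) \<in> kappa1 v"
  by (simp add: kap_iff zero_Ind)

lemma psi_zero: "psi (\<lambda>x. 0) = 0"
  using psi_add[OF zero_kap zero_kap] by simp

definition LSok :: "('f m2 \<Rightarrow> 'k) \<Rightarrow> bool" where
  "LSok f \<longleftrightarrow> psi (rtrans sS f) = act sS (psi f)"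

definition good :: "('f m2 \<Rightarrow> 'k) \<Rightarrow> bool" where
  "good f \<longleftrightarrow> f \<in> IndP1 v \<and> f m2one = 0 \<and> f sS = 0"

lemma good_kaps: "good f \<Longrightarrow> f \<in> kappa1 v \<and> rtrans sS f \<in> kappa1 v"
  unfolding good_def by (simp add: kap_iff rtrans_at_one Ind_rtrans)

lemma LSok_add: "good f \<Longrightarrow> good g \<Longrightarrow> LSok f \<Longrightarrow> LSok g \<Longrightarrow> LSok (\<lambda>x. f x + g x)"
  unfolding LSok_def
  using good_kaps[of f] good_kaps[of g]
  by (simp add: rtrans_add psi_add act_add)

lemma LSok_scal: "good f \<Longrightarrow> LSok f \<Longrightarrow> LSok (\<lambda>x. c * f x)"
  unfolding LSok_def
  using good_kaps[of f]
  by (simp add: rtrans_scal psi_scal act_scal)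

lemma LSok_zero: "LSok (\<lambda>x. 0)"
  unfolding LSok_def by (simp add: rtrans_zero psi_zero act_zero)

lemma good_add: "good f \<Longrightarrow> good g \<Longrightarrow> good (\<lambda>x. f x + g x)"
  unfolding good_def by (simp add: Ind_add)

lemma eO_kap: "(ballf 0 0 :: 'f m2 \<Rightarrow> 'k) \<in> kappa1 v"
  by (simp add: kap_iff eO_Ind ballf_def m2one_def)

lemma CL:
  assumes m1: "m \<ge> 1"
    and sm: "\<forall>g\<in>GL2. near v m g m2one \<longrightarrow> act g (psi (ballf 0 0)) = psi (ballf 0 0)"
    and y0: "y0 \<noteq> 0" and k: "k \<ge> v y0 + m"
  shows "LSok (ballf y0 k)"
proof -
  define u where "u = psi (ballf 0 0)"
  define \<epsilon> where "\<epsilon> = - pw k / y0"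
  define nn where "nn = (1::'f, 0::'f, \<epsilon>, 1::'f)"
  define bb where "bb = (pw k / y0, 1::'f, 0::'f, - y0)"
  have ve: "v \<epsilon> = k - v y0" using y0 pw by (simp add: \<epsilon>_def vdiv vneg)
  have enz: "\<epsilon> \<noteq> 0" using y0 pw by (simp add: \<epsilon>_def)
  have e1: "vge v \<epsilon> 1" using ve k m1 enz by (simp add: vge_def)
  have em: "vge v \<epsilon> m" using ve k enz by (simp add: vge_def)
  have nnG: "nn \<in> GL2" by (simp add: nn_def GL2_def)
  have bbB: "bb \<in> Bor" using y0 pw by (simp add: bb_def Bor_def)
  have bbG: "bb \<in> GL2" using Bor_GL2[OF bbB] .
  have fac: "m2mult sS (aB y0 k) = m2mult bb nn"
    using y0 by (simp add: sS_def aB_def bb_def nn_def \<epsilon>_def)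
  have nnear: "near v m nn m2one" using em by (simp add: nn_def m2one_def)
  have aBG: "aB y0 k \<in> GL2" using Bor_GL2[OF aB_Bor] .
  have L: "psi (rtrans sS (ballf y0 k)) = act bb u"
  proof -
    have "rtrans sS (ballf y0 k :: 'f m2 \<Rightarrow> 'k) = rtrans sS (rtrans (aB y0 k) (ballf 0 0))"
      by (simp only: ballf_rtrans[of y0 k])
    also have "\<dots> = rtrans (m2mult bb nn) (ballf 0 0)" by (simp add: rtrans_comp fac)
    also have "\<dots> = rtrans bb (rtrans nn (ballf 0 0))" by (simp add: rtrans_comp bbG)
    also have "\<dots> = rtrans bb (ballf 0 0)"
    proof -
      have "rtrans nn (ballf 0 0 :: 'f m2 \<Rightarrow> 'k) = ballf 0 0" unfolding nn_def by (rule nn_eO[OF e1])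
      then show ?thesis by simp
    qed
    finally show ?thesis using psi_eq[OF bbB eO_kap] u_def by simp
  qed
  have R: "act sS (psi (ballf y0 k)) = act bb u"
  proof -
    have "psi (ballf y0 k :: 'f m2 \<Rightarrow> 'k) = psi (rtrans (aB y0 k) (ballf 0 0))"
      by (simp only: ballf_rtrans[of y0 k])
    also have "\<dots> = act (aB y0 k) u" using psi_eq[OF aB_Bor eO_kap] u_def by simp
    finally have "act sS (psi (ballf y0 k)) = act (m2mult sS (aB y0 k)) u"
      by (simp add: act_mult aBG)
    also have "\<dots> = act bb (act nn u)" by (simp add: fac act_mult bbG nnG)
    also have "\<dots> = act bb u" using sm nnG nnear u_def by simp
    finally show ?thesis .
  qed
  show ?thesis unfolding LSok_def using L R by simp
qed

end

context nalf begin

lemma inball_cong: "vge v (\<beta> - \<beta>') k \<Longrightarrow> inball \<beta> k x \<longleftrightarrow> inball \<beta>' k x"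
proof -
  assume b: "vge v (\<beta> - \<beta>') k"
  obtain a b c d where xx: "x = (a,b,c,d)" by (cases x rule: prod_cases4)
  have "vge v (d/c - \<beta>) k \<longleftrightarrow> vge v (d/c - \<beta>') k"
  proof
    assume "vge v (d/c - \<beta>) k" then show "vge v (d/c - \<beta>') k" using vge_trans b by blast
  next
    assume "vge v (d/c - \<beta>') k" then show "vge v (d/c - \<beta>) k"
      using vge_trans b vge_diff_sym by blast
  qed
  then show ?thesis unfolding xx by simp
qed

lemma ballf_cong: "vge v (\<beta> - \<beta>') k \<Longrightarrow> (ballf \<beta> k :: 'f m2 \<Rightarrow> 'k::field) = ballf \<beta>' k"
  by (rule ext) (simp add: ballf_def inball_cong)

lemma ballf_one: "ballf \<beta> k m2one = 0"
  by (simp add: ballf_def m2one_def)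

lemma ballf_sS: "ballf \<beta> k sS = (if vge v \<beta> k then 1 else 0)"
  by (simp add: ballf_def sS_def vge_neg GL2_def)

lemma ballf_01: "ballf \<beta> k x = 0 \<or> ballf \<beta> k x = 1"
  by (simp add: ballf_def)

end

context psictx begin

lemma good_hmul: "h \<in> IndP1 v \<Longrightarrow> h m2one = 0 \<Longrightarrow> h sS = 0 \<Longrightarrow> g \<in> IndP1 v \<Longrightarrow> good (\<lambda>x. h x * g x)"
  unfolding good_def by (simp add: Ind_mult)

lemma LS:
  assumes h: "h \<in> IndP1 v" and h1: "h m2one = 0" and hs: "h sS = 0"
  shows "LSok h"
proof -
  obtain m0 where m0: "\<forall>g\<in>GL2. near v m0 g m2one \<longrightarrow> act g (psi (ballf 0 0)) = psi (ballf 0 0)"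
    using act_smooth by blast
  define m where "m = max m0 1"
  have m1: "m \<ge> 1" by (simp add: m_def)
  have sm: "\<forall>g\<in>GL2. near v m g m2one \<longrightarrow> act g (psi (ballf 0 0)) = psi (ballf 0 0)"
    using m0 near_mono[of m _ _ m0] by (simp add: m_def)
  obtain n1 where n1: "\<forall>x\<in>GL2. near v n1 x m2one \<longrightarrow> h x = h m2one"
    using Ind_lc[OF h one_GL2] by blast
  obtain n2 where n2: "\<forall>x\<in>GL2. near v n2 x sS \<longrightarrow> h x = h sS"
    using Ind_lc[OF h sS_GL2] by blast
  have Hbig: "h (Ymat y) = 0" if y: "y \<noteq> 0" "v y \<le> - n1" for y
  proof -
    have G: "(1, 0, 1/y, 1) \<in> GL2" by (simp add: GL2_def)
    have "h (1, 0, 1/y, 1) = h (Ymat (1 / (1/y)))" using lines[OF h G] y by simp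
    moreover have "near v n1 (1, 0, 1/y, 1) m2one"
      using y vinv[of y] by (simp add: m2one_def vge_def divide_inverse)
    ultimately show ?thesis using n1 G h1 by simp
  qed
  have Hsmall: "h (Ymat y) = 0" if y: "vge v y n2" for y
  proof -
    have "near v n2 (Ymat y) sS" using y by (simp add: Ymat_def sS_def)
    then show ?thesis using n2 Ymat_GL2 hs by simp
  qed
  define k0 where "k0 = 1 - n1"
  have hk0: "h = (\<lambda>x. h x * ballf 0 k0 x)"
  proof (rule ext)
    fix x :: "'f m2"
    obtain a b c d where xx: "x = (a,b,c,d)" by (cases x rule: prod_cases4)
    show "h x = h x * ballf 0 k0 x"
    proof (cases "x \<in> GL2")
      case False then show ?thesis using Ind_out[OF h] by simp
    next
      case G: True
      show ?thesis
      proof (cases "c = 0")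
        case True then show ?thesis using lines0[OF h] G xx h1 by simp
      next
        case False
        show ?thesis
        proof (cases "vge v (d/c - 0) k0")
          case True then show ?thesis using G False xx by (simp add: ballf_def)
        next
          case F2: False
          then have "d/c \<noteq> 0" "v (d/c) \<le> - n1" by (auto simp: vge_def k0_def)
          then have "h (Ymat (d/c)) = 0" using Hbig by blast
          then show ?thesis using lines[OF h] G False xx by simp
        qed
      qed
    qed
  qed
  obtain R where R: "finite R" "\<forall>r\<in>R. vge v r 0" "\<forall>x. vge v x 0 \<longrightarrow> (\<exists>r\<in>R. vge v (x - r) 1)"
    using resid by blast
  define Q where "Q = (\<lambda>\<beta> k. LSok (\<lambda>x. h x * ballf \<beta> k x))"
  have gb: "good (\<lambda>x. h x * ballf \<beta> k x)" for \<beta> k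
    using good_hmul[OF h h1 hs ballf_Ind] .
  have cong: "vge v (\<beta> - \<beta>') k \<Longrightarrow> Q \<beta> k \<Longrightarrow> Q \<beta>' k" for \<beta> \<beta>' k
    unfolding Q_def using ballf_cong[of \<beta> \<beta>' k, where 'k='k] by simp
  have split: "Q \<beta> k" if all: "\<forall>r\<in>R. Q (\<beta> + pw k * r) (k+1)" for \<beta> k
  proof -
    define U where "U = (\<lambda>R0 (x :: 'f m2). if x \<in> GL2 \<and> (\<exists>r\<in>R0. inball (\<beta> + pw k * r) (k+1) x) then 1 else (0::'k))"
    have ind: "R0 \<subseteq> R \<Longrightarrow> U R0 \<in> IndP1 v \<and> LSok (\<lambda>x. h x * U R0 x)" for R0
      using finite_subset[OF _ R(1)]
    proof (induction R0 rule: infinite_finite_induct)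
      case (infinite A) then show ?case by auto
    next
      case empty
      have "U {} = (\<lambda>x. 0)" by (simp add: U_def)
      then show ?case using zero_Ind LSok_zero by simp
    next
      case (insert r A)
      have IH: "U A \<in> IndP1 v" "LSok (\<lambda>x. h x * U A x)" using insert by auto
      have rR: "r \<in> R" using insert by auto
      show ?case
      proof (cases "\<exists>r'\<in>A. \<exists>y. vge v (y - (\<beta> + pw k * r)) (k+1) \<and> vge v (y - (\<beta> + pw k * r')) (k+1)")
        case True
        then obtain r' y where r': "r' \<in> A" "vge v (y - (\<beta> + pw k * r)) (k+1)" "vge v (y - (\<beta> + pw k * r')) (k+1)"
          by blast
        have cc: "vge v ((\<beta> + pw k * r) - (\<beta> + pw k * r')) (k+1)"
          using vge_trans[OF r'(2)[unfolded vge_diff_sym[of y]] r'(3)] .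
        have eqb: "inball (\<beta> + pw k * r) (k+1) x \<longleftrightarrow> inball (\<beta> + pw k * r') (k+1) x" for x
          using inball_cong[OF cc] .
        have "U (insert r A) = U A" unfolding U_def using eqb r'(1) by (auto intro!: ext)
        then show ?thesis using IH by simp
      next
        case False
        have disj: "\<not> (inball (\<beta> + pw k * r) (k+1) x \<and> (\<exists>r'\<in>A. inball (\<beta> + pw k * r') (k+1) x))" for x
        proof
          assume a: "inball (\<beta> + pw k * r) (k+1) x \<and> (\<exists>r'\<in>A. inball (\<beta> + pw k * r') (k+1) x)"
          obtain a1 b1 c1 d1 where xx: "x = (a1,b1,c1,d1)" by (cases x rule: prod_cases4)
          obtain r' where r'': "r' \<in> A" "inball (\<beta> + pw k * r') (k+1) x" using a by blast
          have "vge v (d1/c1 - (\<beta> + pw k * r)) (k+1)" "vge v (d1/c1 - (\<beta> + pw k * r')) (k+1)"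
            using a r''(2) xx by auto
          then show False using False r''(1) by blast
        qed
        have eq: "U (insert r A) = (\<lambda>x. U A x + ballf (\<beta> + pw k * r) (k+1) x)"
          unfolding U_def ballf_def using disj by (auto intro!: ext)
        have gU: "good (\<lambda>x. h x * U A x)" using good_hmul[OF h h1 hs IH(1)] .
        have "LSok (\<lambda>x. h x * U A x + h x * ballf (\<beta> + pw k * r) (k+1) x)"
          using LSok_add[OF gU gb IH(2)] all rR Q_def by simp
        moreover have "(\<lambda>x. h x * U (insert r A) x) = (\<lambda>x. h x * U A x + h x * ballf (\<beta> + pw k * r) (k+1) x)"
          unfolding eq by (simp add: distrib_left)
        ultimately show ?thesis using Ind_add[OF IH(1) ballf_Ind] eq by simp
      qed
    qed
    have UR: "U R = ballf \<beta> k"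
    proof (rule ext)
      fix x :: "'f m2"
      obtain a b c d where xx: "x = (a,b,c,d)" by (cases x rule: prod_cases4)
      have "(\<exists>r\<in>R. inball (\<beta> + pw k * r) (k+1) x) \<longleftrightarrow> inball \<beta> k x"
      proof
        assume "\<exists>r\<in>R. inball (\<beta> + pw k * r) (k+1) x"
        then obtain r where r: "r \<in> R" "c \<noteq> 0" "vge v (d/c - (\<beta> + pw k * r)) (k+1)" using xx by auto
        have a1: "vge v (d/c - (\<beta> + pw k * r)) k" using vge_mono[OF r(3)] by simp
        have a2: "vge v (pw k * r) (k + 0)" using vge_mult[of "pw k" k r 0] pw R(2) r(1) by (simp add: vge_def)
        have a3: "vge v (pw k * r) k" using a2 by simp
        have "vge v ((d/c - (\<beta> + pw k * r)) + pw k * r) k" by (rule vge_add[OF a1 a3])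
        moreover have "(d/c - (\<beta> + pw k * r)) + pw k * r = d/c - \<beta>" by simp
        ultimately show "inball \<beta> k x" using xx r by simp
      next
        assume "inball \<beta> k x"
        then have c: "c \<noteq> 0" and t: "vge v (d/c - \<beta>) k" using xx by auto
        define t where "t = (d/c - \<beta>) / pw k"
        have "vge v t 0" using t vge_div_nz[of "pw k" "d/c - \<beta>" 0] pw by (simp add: t_def)
        then obtain r where r: "r \<in> R" "vge v (t - r) 1" using R(3) by blast
        have "vge v (pw k * (t - r)) (k + 1)" using vge_mult[OF _ r(2), of "pw k" k] pw by (simp add: vge_def)
        moreover have "pw k * (t - r) = d/c - (\<beta> + pw k * r)" using pw by (simp add: t_def field_simps)
        ultimately show "\<exists>r\<in>R. inball (\<beta> + pw k * r) (k+1) x" using r c xx by auto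
      qed
      then show "U R x = ballf \<beta> k x" unfolding U_def ballf_def by simp
    qed
    show ?thesis using ind[of R] UR unfolding Q_def by simp
  qed
  have loc: "\<exists>n. \<forall>k\<ge>n. Q y k" if "vge v (y - 0) k0" for y
  proof (cases "vge v y n2")
    case True
    show ?thesis
    proof (intro exI[of _ n2] allI impI)
      fix k assume k: "k \<ge> n2"
      have "(\<lambda>x. h x * ballf y k x) = (\<lambda>x. 0)"
      proof (rule ext)
        fix x :: "'f m2"
        obtain a b c d where xx: "x = (a,b,c,d)" by (cases x rule: prod_cases4)
        show "h x * ballf y k x = 0"
        proof (cases "x \<in> GL2 \<and> inball y k x")
          case False then show ?thesis by (auto simp: ballf_def)
        next
          case T: True
          then have c: "c \<noteq> 0" and a: "vge v (d/c - y) k" using xx by auto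
          have "vge v ((d/c - y) + y) n2" using vge_add[OF vge_mono[OF a k] True] .
          then have "h (Ymat (d/c)) = 0" using Hsmall by simp
          then show ?thesis using lines[OF h] T c xx by simp
        qed
      qed
      then show "Q y k" unfolding Q_def using LSok_zero by simp
    qed
  next
    case False
    then have y0: "y \<noteq> 0" and vy: "v y < n2" by (auto simp: vge_def)
    obtain n3 where n3: "\<forall>x\<in>GL2. near v n3 x (Ymat y) \<longrightarrow> h x = h (Ymat y)"
      using Ind_lc[OF h Ymat_GL2] by blast
    show ?thesis
    proof (intro exI[of _ "max n3 (v y + m)"] allI impI)
      fix k assume k: "k \<ge> max n3 (v y + m)"
      have eq: "(\<lambda>x. h x * ballf y k x) = (\<lambda>x. h (Ymat y) * ballf y k x)"
      proof (rule ext)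
        fix x :: "'f m2"
        obtain a b c d where xx: "x = (a,b,c,d)" by (cases x rule: prod_cases4)
        show "h x * ballf y k x = h (Ymat y) * ballf y k x"
        proof (cases "x \<in> GL2 \<and> inball y k x")
          case False then show ?thesis by (auto simp: ballf_def)
        next
          case T: True
          then have c: "c \<noteq> 0" and a: "vge v (d/c - y) k" using xx by auto
          have "near v n3 (Ymat (d/c)) (Ymat y)" using vge_mono[OF a] k by (simp add: near_Ymat)
          then have "h (Ymat (d/c)) = h (Ymat y)" using n3 Ymat_GL2 by blast
          then show ?thesis using lines[OF h] T c xx by simp
        qed
      qed
      have gy: "good (ballf y k)"
      proof -
        have "\<not> vge v y k" using y0 k m1 by (simp add: vge_def)
        then show ?thesis unfolding good_def by (simp add: ballf_Ind ballf_one ballf_sS)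
      qed
      have "LSok (ballf y k)" using CL[OF m1 sm y0] k by simp
      then have "LSok (\<lambda>x. h (Ymat y) * ballf y k x)" using LSok_scal[OF gy] by simp
      then show "Q y k" unfolding Q_def eq .
    qed
  qed
  have "Q 0 k0" using ball_induct[of R Q 0 k0] R(2) cong split loc by blast
  then show ?thesis unfolding Q_def using hk0 by simp
qed

end

context psictx begin

lemma LE:
  assumes g: "g \<in> GL2" and hk: "h \<in> kappa1 v" and hg: "h g = 0"
  shows "psi (rtrans g h) = act g (psi h)"
proof -
  obtain a b c d where gg: "g = (a,b,c,d)" by (cases g rule: prod_cases4)
  have hI: "h \<in> IndP1 v" and h1: "h m2one = 0" using hk by (auto simp: kap_iff)
  show ?thesis
  proof (cases "c = 0")
    case True
    then have "g \<in> Bor" using g gg by (simp add: GL2_def Bor_def)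
    then show ?thesis using psi_eq hk by blast
  next
    case False
    define b1 where "b1 = (- (a*d - b*c) / c, a / c, 0::'f, 1::'f)"
    define b2 where "b2 = (c, d, 0::'f, 1::'f)"
    have det: "a*d - b*c \<noteq> 0" using g gg by (simp add: GL2_def)
    have b1B: "b1 \<in> Bor" using False det by (simp add: b1_def Bor_def)
    have b2B: "b2 \<in> Bor" using False by (simp add: b2_def Bor_def)
    have b1G: "b1 \<in> GL2" using Bor_GL2[OF b1B] .
    have b2G: "b2 \<in> GL2" using Bor_GL2[OF b2B] .
    have fac: "g = m2mult b1 (m2mult sS b2)"
      using False unfolding gg b1_def b2_def sS_def by (simp add: field_simps)
    have sb2G: "m2mult sS b2 \<in> GL2" using GL2_mult[OF sS_GL2 b2G] .
    define h2 where "h2 = rtrans b2 h"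
    have h2I: "h2 \<in> IndP1 v" using Ind_rtrans[OF hI b2G] h2_def by simp
    have h2_1: "h2 m2one = 0" using h1 Ind_left[OF hI b2B one_GL2] by (simp add: h2_def rtrans_app)
    have h2s: "h2 sS = 0"
    proof -
      have "h2 sS = h (m2mult sS b2)" by (simp add: h2_def rtrans_app)
      also have "\<dots> = h g" using Ind_left[OF hI b1B sb2G] fac by simp
      finally show ?thesis using hg by simp
    qed
    have h2k: "h2 \<in> kappa1 v" using h2I h2_1 by (simp add: kap_iff)
    have ls: "psi (rtrans sS h2) = act sS (psi h2)" using LS[OF h2I h2_1 h2s] unfolding LSok_def .
    define h3 where "h3 = rtrans sS h2"
    have h3k: "h3 \<in> kappa1 v" using rtrans_kap[OF h2I sS_GL2 h2s] h3_def by simp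
    have "rtrans g h = rtrans b1 h3"
      unfolding h3_def h2_def fac by (simp add: rtrans_comp b1G)
    then have "psi (rtrans g h) = act b1 (psi h3)" using psi_eq[OF b1B h3k] by simp
    also have "\<dots> = act b1 (act sS (act b2 (psi h)))"
      using ls psi_eq[OF b2B hk] h3_def h2_def by simp
    also have "\<dots> = act g (psi h)" unfolding fac by (simp add: act_mult b1G b2G sb2G)
    finally show ?thesis .
  qed
qed

lemma indep:
  assumes f: "f \<in> IndP1 v" and t: "t \<in> GL2" "f t = 0" and t': "t' \<in> GL2" "f t' = 0"
  shows "act (minv t) (psi (rtrans t f)) = act (minv t') (psi (rtrans t' f))"
proof -
  define k where "k = rtrans t f"
  have kk: "k \<in> kappa1 v" using rtrans_kap[OF f t] k_def by simp
  define g where "g = m2mult t' (minv t)"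
  have gG: "g \<in> GL2" using GL2_mult[OF t'(1) minv_GL2[OF t(1)]] g_def by simp
  have gt: "m2mult g t = t'" by (simp add: g_def m2mult_assoc minv_left[OF t(1)])
  have kg: "k g = 0" using t' gt by (simp add: k_def rtrans_app gG)
  have "rtrans g k = rtrans t' f" by (simp add: k_def rtrans_comp gG gt)
  then have e: "psi (rtrans t' f) = act g (psi k)" using LE[OF gG kk kg] by simp
  have "m2mult (minv t') g = minv t"
    by (simp add: g_def m2mult_assoc[symmetric] minv_left[OF t'(1)])
  then have "act (minv t') (act g (psi k)) = act (minv t) (psi k)"
    using act_mult[OF minv_GL2[OF t'(1)] gG, of "psi k"] by simp
  then show ?thesis using e k_def by simp
qed

definition T :: "('f m2 \<Rightarrow> 'k) \<Rightarrow> 'f m2" where "T f = (SOME t. t \<in> GL2 \<and> f t = 0)"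

definition E :: "('f m2 \<Rightarrow> 'k) \<Rightarrow> 'w" where
  "E f = act (minv (T f)) (psi (rtrans (T f) f))"

lemma E_eq:
  assumes f: "f \<in> IndP1 v" and t: "t \<in> GL2" "f t = 0"
  shows "E f = act (minv t) (psi (rtrans t f))"
proof -
  have ex: "\<exists>t. t \<in> GL2 \<and> f t = 0" using t by blast
  have T: "T f \<in> GL2" "f (T f) = 0" using someI_ex[OF ex] unfolding T_def by auto
  show ?thesis unfolding E_def using indep[OF f T t] .
qed

lemma E_add:
  assumes f: "f \<in> IndP1 v" and g: "g \<in> IndP1 v" and t: "t \<in> GL2" "f t = 0" "g t = 0"
  shows "E (\<lambda>x. f x + g x) = E f + E g"
proof -
  have fg: "(\<lambda>x. f x + g x) \<in> IndP1 v" using Ind_add[OF f g] .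
  have k1: "rtrans t f \<in> kappa1 v" using rtrans_kap[OF f t(1,2)] .
  have k2: "rtrans t g \<in> kappa1 v" using rtrans_kap[OF g t(1,3)] .
  have "E (\<lambda>x. f x + g x) = act (minv t) (psi (rtrans t (\<lambda>x. f x + g x)))"
    using E_eq[OF fg t(1)] t by simp
  also have "\<dots> = act (minv t) (psi (rtrans t f) + psi (rtrans t g))"
    by (simp add: rtrans_add psi_add[OF k1 k2])
  also have "\<dots> = E f + E g"
    using E_eq[OF f t(1,2)] E_eq[OF g t(1,3)] act_add[OF minv_GL2[OF t(1)]] by simp
  finally show ?thesis .
qed

lemma E_scal:
  assumes f: "f \<in> IndP1 v" and t: "t \<in> GL2" "f t = 0"
  shows "E (\<lambda>x. c * f x) = scale c (E f)"
proof -
  have cf: "(\<lambda>x. c * f x) \<in> IndP1 v" using Ind_scal[OF f] .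
  have k1: "rtrans t f \<in> kappa1 v" using rtrans_kap[OF f t] .
  have "E (\<lambda>x. c * f x) = act (minv t) (psi (rtrans t (\<lambda>x. c * f x)))"
    using E_eq[OF cf t(1)] t by simp
  also have "\<dots> = scale c (E f)"
    using E_eq[OF f t] act_scal[OF minv_GL2[OF t(1)]] by (simp add: rtrans_scal psi_scal[OF k1])
  finally show ?thesis .
qed

lemma E_rtrans:
  assumes g: "g \<in> GL2" and f: "f \<in> IndP1 v" and t: "t \<in> GL2" "f t = 0"
  shows "E (rtrans g f) = act g (E f)"
proof -
  define t' where "t' = m2mult t (minv g)"
  have t'G: "t' \<in> GL2" using GL2_mult[OF t(1) minv_GL2[OF g]] t'_def by simp
  have t'g: "m2mult t' g = t" by (simp add: t'_def m2mult_assoc minv_left[OF g])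
  have gf: "rtrans g f \<in> IndP1 v" using Ind_rtrans[OF f g] .
  have z: "rtrans g f t' = 0" using t t'g by (simp add: rtrans_app t'G)
  have "E (rtrans g f) = act (minv t') (psi (rtrans t' (rtrans g f)))"
    using E_eq[OF gf t'G z] .
  also have "\<dots> = act (minv t') (psi (rtrans t f))" by (simp add: rtrans_comp t'G t'g)
  finally have e1: "E (rtrans g f) = act (minv t') (psi (rtrans t f))" .
  define Y where "Y = psi (rtrans t f)"
  have "m2mult t' (m2mult g (minv t)) = m2one"
    by (simp add: m2mult_assoc[symmetric] t'g minv_right[OF t(1)])
  then have "act t' (act g (act (minv t) Y)) = Y"
    using act_mult[OF t'G GL2_mult[OF g minv_GL2[OF t(1)]], of "act (minv t) Y"]
      act_mult[OF g minv_GL2[OF t(1)], of Y]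
    by (metis act_mult act_one GL2_mult g minv_GL2 t'G t(1))
  then have "act (minv t') Y = act g (act (minv t) Y)"
    using act_inv2[OF t'G, of "act g (act (minv t) Y)"] by simp
  then show ?thesis using e1 E_eq[OF f t] Y_def by simp
qed

lemma E_kap: "f \<in> kappa1 v \<Longrightarrow> E f = psi f"
proof -
  assume fk: "f \<in> kappa1 v"
  then have f: "f \<in> IndP1 v" "f m2one = 0" by (auto simp: kap_iff)
  have mi: "minv (m2one :: 'f m2) = m2one" by (simp add: minv_def m2one_def)
  have "rtrans m2one f = f" using rtrans_one[of f] Ind_out[OF f(1)] by blast
  then show ?thesis using E_eq[OF f(1) one_GL2 f(2)] mi by simp
qed

end

context nalf begin

lemma eO_sS: "ballf 0 0 sS = 1"
  by (simp add: ballf_sS)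

lemma oneG_GL2: "x \<in> GL2 \<Longrightarrow> oneG x = 1" by (simp add: oneG_def)
lemma oneG_out: "x \<notin> GL2 \<Longrightarrow> oneG x = 0" by (simp add: oneG_def)

end

context psictx begin

definition e2 :: "'f m2 \<Rightarrow> 'k" where "e2 = (\<lambda>x. oneG x - ballf 0 0 x)"

lemma e2_Ind: "e2 \<in> IndP1 v" unfolding e2_def using Ind_diff[OF oneG_Ind eO_Ind] .

lemma e2_sS: "e2 sS = 0" by (simp add: e2_def eO_sS oneG_def)

lemma split_fun: "f \<in> IndP1 v \<Longrightarrow> (\<lambda>x. f x * a x + f x * (oneG x - a x)) = f"
  by (rule ext) (auto simp: oneG_def algebra_simps Ind_out)

definition Phi :: "('f m2 \<Rightarrow> 'k) \<Rightarrow> 'w" where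
  "Phi f = (if f \<in> IndP1 v then E (\<lambda>x. f x * ballf 0 0 x) + E (\<lambda>x. f x * e2 x) else 0)"

lemma fe_Ind: "f \<in> IndP1 v \<Longrightarrow> (\<lambda>x. f x * ballf 0 0 x) \<in> IndP1 v"
  using Ind_mult eO_Ind by blast

lemma fe2_Ind: "f \<in> IndP1 v \<Longrightarrow> (\<lambda>x. f x * e2 x) \<in> IndP1 v"
  using Ind_mult e2_Ind by blast

lemma Phi_add:
  assumes f: "f \<in> IndP1 v" and g: "g \<in> IndP1 v"
  shows "Phi (\<lambda>x. f x + g x) = Phi f + Phi g"
proof -
  have fg: "(\<lambda>x. f x + g x) \<in> IndP1 v" using Ind_add[OF f g] .
  have a: "E (\<lambda>x. (f x + g x) * ballf 0 0 x) = E (\<lambda>x. f x * ballf 0 0 x) + E (\<lambda>x. g x * ballf 0 0 x)"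
    using E_add[OF fe_Ind[OF f] fe_Ind[OF g] one_GL2] by (simp add: ballf_one distrib_right)
  have b: "E (\<lambda>x. (f x + g x) * e2 x) = E (\<lambda>x. f x * e2 x) + E (\<lambda>x. g x * e2 x)"
    using E_add[OF fe2_Ind[OF f] fe2_Ind[OF g] sS_GL2] by (simp add: e2_sS distrib_right)
  show ?thesis unfolding Phi_def using f g fg a b by (simp add: algebra_simps)
qed

lemma Phi_scal:
  assumes f: "f \<in> IndP1 v"
  shows "Phi (\<lambda>x. c * f x) = scale c (Phi f)"
proof -
  have cf: "(\<lambda>x. c * f x) \<in> IndP1 v" using Ind_scal[OF f] .
  have a: "E (\<lambda>x. (c * f x) * ballf 0 0 x) = scale c (E (\<lambda>x. f x * ballf 0 0 x))"
    using E_scal[OF fe_Ind[OF f] one_GL2] by (simp add: ballf_one mult.assoc)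
  have b: "E (\<lambda>x. (c * f x) * e2 x) = scale c (E (\<lambda>x. f x * e2 x))"
    using E_scal[OF fe2_Ind[OF f] sS_GL2] by (simp add: e2_sS mult.assoc)
  show ?thesis unfolding Phi_def using f cf a b
    by (simp add: module.scale_right_distrib[OF modS])
qed

lemma E_split:
  assumes F: "F \<in> IndP1 v" and a: "a \<in> IndP1 v" and t: "t \<in> GL2" "F t = 0"
  shows "E F = E (\<lambda>x. F x * a x) + E (\<lambda>x. F x * (oneG x - a x))"
proof -
  have a2: "(\<lambda>x. oneG x - a x) \<in> IndP1 v" using Ind_diff[OF oneG_Ind a] .
  have "E (\<lambda>x. F x * a x + F x * (oneG x - a x)) = E (\<lambda>x. F x * a x) + E (\<lambda>x. F x * (oneG x - a x))"
    using E_add[OF Ind_mult[OF F a] Ind_mult[OF F a2] t(1)] t(2) by simp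
  then show ?thesis using split_fun[OF F] by simp
qed

lemma Phi_rtrans:
  assumes g: "g \<in> GL2" and f: "f \<in> IndP1 v"
  shows "Phi (rtrans g f) = act g (Phi f)"
proof -
  define F where "F = rtrans g f"
  define e where "e = (ballf 0 0 :: 'f m2 \<Rightarrow> 'k)"
  define e' where "e' = rtrans g e"
  have FI: "F \<in> IndP1 v" using Ind_rtrans[OF f g] F_def by simp
  have eI: "e \<in> IndP1 v" using eO_Ind e_def by simp
  have e'I: "e' \<in> IndP1 v" using Ind_rtrans[OF eI g] e'_def by simp
  have e2e: "e2 = (\<lambda>x. oneG x - e x)" by (simp add: e2_def e_def)
  have e2': "rtrans g e2 = (\<lambda>x. oneG x - e' x)"
    by (simp add: e2e rtrans_diff rtrans_oneG g e'_def)
  have mg: "minv g \<in> GL2" using minv_GL2[OF g] .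
  have smg: "m2mult sS (minv g) \<in> GL2" using GL2_mult[OF sS_GL2 mg] .
  have e1: "e m2one = 0" by (simp add: e_def ballf_one)
  have es: "e sS = 1" by (simp add: e_def eO_sS)
  have e'z: "e' (minv g) = 0"
    using e1 by (simp add: e'_def rtrans_app mg minv_left[OF g])
  have e'sz: "e' (m2mult sS (minv g)) = 1"
    using es by (simp add: e'_def rtrans_app smg m2mult_assoc minv_left[OF g])
  have ogs: "oneG (m2mult sS (minv g)) = (1::'k)" using smg by (simp add: oneG_def)
  have os: "oneG (sS::'f m2) = (1::'k)" by (simp add: oneG_def)
  have o1: "oneG m2one = (1::'k)" by (simp add: oneG_def)
  have ogm: "oneG (minv g) = (1::'k)" using mg by (simp add: oneG_def)
  have lhs: "Phi F = E (\<lambda>x. F x * e x) + E (\<lambda>x. F x * (oneG x - e x))"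
    unfolding Phi_def using FI e2e e_def by simp
  have rhs: "act g (Phi f) = E (\<lambda>x. F x * e' x) + E (\<lambda>x. F x * (oneG x - e' x))"
  proof -
    have "act g (Phi f) = act g (E (\<lambda>x. f x * e x)) + act g (E (\<lambda>x. f x * e2 x))"
      unfolding Phi_def using f act_add[OF g] e_def by simp
    also have "act g (E (\<lambda>x. f x * e x)) = E (rtrans g (\<lambda>x. f x * e x))"
      using E_rtrans[OF g Ind_mult[OF f eI] one_GL2] e1 by simp
    also have "act g (E (\<lambda>x. f x * e2 x)) = E (rtrans g (\<lambda>x. f x * e2 x))"
      using E_rtrans[OF g Ind_mult[OF f e2_Ind] sS_GL2] e2_sS by simp
    finally show ?thesis by (simp add: rtrans_mult F_def e'_def e2')
  qed
  let ?m = "\<lambda>a b x. F x * a x * b x"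
  have o'I: "(\<lambda>x. oneG x - e x) \<in> IndP1 v" using Ind_diff[OF oneG_Ind eI] .
  have o''I: "(\<lambda>x. oneG x - e' x) \<in> IndP1 v" using Ind_diff[OF oneG_Ind e'I] .
  have s1: "E (\<lambda>x. F x * e x) = E (\<lambda>x. F x * e x * e' x) + E (\<lambda>x. F x * e x * (oneG x - e' x))"
    using E_split[OF Ind_mult[OF FI eI] e'I one_GL2] e1 by simp
  have s2: "E (\<lambda>x. F x * (oneG x - e x)) = E (\<lambda>x. F x * (oneG x - e x) * e' x) + E (\<lambda>x. F x * (oneG x - e x) * (oneG x - e' x))"
    using E_split[OF Ind_mult[OF FI o'I] e'I sS_GL2] es os by simp
  have s3: "E (\<lambda>x. F x * e' x) = E (\<lambda>x. F x * e' x * e x) + E (\<lambda>x. F x * e' x * (oneG x - e x))"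
    using E_split[OF Ind_mult[OF FI e'I] eI mg] e'z by simp
  have s4: "E (\<lambda>x. F x * (oneG x - e' x)) = E (\<lambda>x. F x * (oneG x - e' x) * e x) + E (\<lambda>x. F x * (oneG x - e' x) * (oneG x - e x))"
    using E_split[OF Ind_mult[OF FI o''I] eI smg] e'sz ogs by simp
  have c1: "(\<lambda>x. F x * e x * e' x) = (\<lambda>x. F x * e' x * e x)" by (simp add: algebra_simps)
  have c2: "(\<lambda>x. F x * e x * (oneG x - e' x)) = (\<lambda>x. F x * (oneG x - e' x) * e x)" by (simp add: algebra_simps)
  have c3: "(\<lambda>x. F x * (oneG x - e x) * e' x) = (\<lambda>x. F x * e' x * (oneG x - e x))" by (simp add: algebra_simps)
  have c4: "(\<lambda>x. F x * (oneG x - e x) * (oneG x - e' x)) = (\<lambda>x. F x * (oneG x - e' x) * (oneG x - e x))" by (simp add: algebra_simps)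
  have "Phi F = act g (Phi f)"
    unfolding lhs rhs s1 s2 s3 s4 c1 c2 c3 c4 by (simp add: algebra_simps)
  then show ?thesis using F_def by simp
qed

lemma Phi_Hom: "Phi \<in> HomOn GL2 (IndP1 v) scale act"
  unfolding HomOn_def lin_on_def
  using Phi_add Phi_scal Phi_rtrans by (auto simp: Phi_def)

lemma Phi_res: "f \<in> kappa1 v \<Longrightarrow> Phi f = psi f"
proof -
  assume fk: "f \<in> kappa1 v"
  then have f: "f \<in> IndP1 v" "f m2one = 0" by (auto simp: kap_iff)
  have "Phi f = E (\<lambda>x. f x * ballf 0 0 x) + E (\<lambda>x. f x * (oneG x - ballf 0 0 x))"
    unfolding Phi_def e2_def using f by simp
  also have "\<dots> = E f" using E_split[OF f(1) eO_Ind one_GL2 f(2)] by simp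
  finally show ?thesis using E_kap[OF fk] by simp
qed

end

context rep begin

lemma hom_add: "\<Phi> \<in> HomOn H A scale act \<Longrightarrow> f \<in> A \<Longrightarrow> g \<in> A \<Longrightarrow> \<Phi> (\<lambda>x. f x + g x) = \<Phi> f + \<Phi> g"
  unfolding HomOn_def lin_on_def by blast

lemma hom_scal: "\<Phi> \<in> HomOn H A scale act \<Longrightarrow> f \<in> A \<Longrightarrow> \<Phi> (\<lambda>x. c * f x) = scale c (\<Phi> f)"
  unfolding HomOn_def lin_on_def by blast

lemma hom_eq: "\<Phi> \<in> HomOn H A scale act \<Longrightarrow> h \<in> H \<Longrightarrow> f \<in> A \<Longrightarrow> \<Phi> (rtrans h f) = act h (\<Phi> f)"
  unfolding HomOn_def by blast

lemma hom_out: "\<Phi> \<in> HomOn H A scale act \<Longrightarrow> f \<notin> A \<Longrightarrow> \<Phi> f = 0"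
  unfolding HomOn_def by blast

lemma hom_zero: "\<Phi> \<in> HomOn H A scale act \<Longrightarrow> (\<lambda>x. 0) \<in> A \<Longrightarrow> \<Phi> (\<lambda>x. 0) = 0"
  using hom_add[of \<Phi> H A "\<lambda>x. 0" "\<lambda>x. 0"] by simp

lemma kap_Ind: "f \<in> kappa1 v \<Longrightarrow> f \<in> IndP1 v" by (simp add: kap_iff)

lemma kap_Bor: "b \<in> Bor \<Longrightarrow> f \<in> kappa1 v \<Longrightarrow> rtrans b f \<in> kappa1 v"
  using rtrans_kap[of f b] Ind_left[of f b m2one] Bor_GL2[of b] by (simp add: kap_iff)

lemma kap_add: "f \<in> kappa1 v \<Longrightarrow> g \<in> kappa1 v \<Longrightarrow> (\<lambda>x. f x + g x) \<in> kappa1 v"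
  by (simp add: kap_iff Ind_add)

lemma kap_scal: "f \<in> kappa1 v \<Longrightarrow> (\<lambda>x. c * f x) \<in> kappa1 v"
  by (simp add: kap_iff Ind_scal)

lemma part2: "bij_betw sp_class (kappa1 v :: ('f m2 \<Rightarrow> 'k) set) (Sp v)"
proof -
  have inj: "inj_on sp_class (kappa1 v :: ('f m2 \<Rightarrow> 'k) set)"
  proof (rule inj_onI)
    fix f g :: "'f m2 \<Rightarrow> 'k"
    assume f: "f \<in> kappa1 v" and g: "g \<in> kappa1 v" and e: "sp_class f = sp_class g"
    have "f \<in> sp_class f" unfolding sp_class_def by (rule CollectI, rule exI[of _ 0]) simp
    then have "f \<in> sp_class g" using e by simp
    then obtain c where c: "f = (\<lambda>x. g x + c * oneG x)" unfolding sp_class_def by blast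
    have "f m2one = g m2one + c" using c by (simp add: oneG_def)
    then have "c = 0" using f g by (simp add: kap_iff)
    then show "f = g" using c by simp
  qed
  have img: "sp_class ` (kappa1 v :: ('f m2 \<Rightarrow> 'k) set) = Sp v"
  proof
    show "sp_class ` kappa1 v \<subseteq> Sp v" unfolding Sp_def using kap_Ind by blast
  next
    show "Sp v \<subseteq> sp_class ` (kappa1 v :: ('f m2 \<Rightarrow> 'k) set)"
    proof
      fix X assume "X \<in> (Sp v :: ('f m2 \<Rightarrow> 'k) set set)"
      then obtain f where f: "f \<in> IndP1 v" and X: "X = sp_class f" unfolding Sp_def by blast
      define f' where "f' = (\<lambda>x. f x - f m2one * oneG x)"
      have f'I: "f' \<in> IndP1 v" unfolding f'_def using Ind_diff[OF f Ind_scal[OF oneG_Ind, of "f m2one"]] .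
      have f'k: "f' \<in> kappa1 v"
        unfolding kap_iff using f'I by (simp add: f'_def oneG_def)
      have "sp_class f' = sp_class f"
      proof -
        have "(\<lambda>x. f' x + c * oneG x) = (\<lambda>x. f x + (c - f m2one) * oneG x)" for c
          by (simp add: f'_def algebra_simps)
        moreover have "(\<lambda>x. f x + c * oneG x) = (\<lambda>x. f' x + (c + f m2one) * oneG x)" for c
          by (simp add: f'_def algebra_simps)
        ultimately show ?thesis unfolding sp_class_def
        proof -
          assume e1: "\<And>c. (\<lambda>x. f' x + c * oneG x) = (\<lambda>x. f x + (c - f m2one) * oneG x)"
            and e2: "\<And>c. (\<lambda>x. f x + c * oneG x) = (\<lambda>x. f' x + (c + f m2one) * oneG x)"
          show "{\<lambda>x. f' x + c * oneG x |c. True} = {\<lambda>x. f x + c * oneG x |c. True}"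
          proof (rule set_eqI)
            fix F :: "'f m2 \<Rightarrow> 'k"
            show "F \<in> {\<lambda>x. f' x + c * oneG x |c. True} \<longleftrightarrow> F \<in> {\<lambda>x. f x + c * oneG x |c. True}"
            proof
              assume "F \<in> {\<lambda>x. f' x + c * oneG x |c. True}"
              then obtain c where "F = (\<lambda>x. f' x + c * oneG x)" by blast
              then have "F = (\<lambda>x. f x + (c - f m2one) * oneG x)" using e1 by simp
              then show "F \<in> {\<lambda>x. f x + c * oneG x |c. True}" by blast
            next
              assume "F \<in> {\<lambda>x. f x + c * oneG x |c. True}"
              then obtain c where "F = (\<lambda>x. f x + c * oneG x)" by blast
              then have "F = (\<lambda>x. f' x + (c + f m2one) * oneG x)" using e2 by simp
              then show "F \<in> {\<lambda>x. f' x + c * oneG x |c. True}" by blast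
            qed
          qed
        qed
      qed
      then show "X \<in> sp_class ` kappa1 v" using X f'k by blast
    qed
  qed
  show ?thesis using inj img by (simp add: bij_betw_def)
qed

definition res :: "(('f m2 \<Rightarrow> 'k) \<Rightarrow> 'w) \<Rightarrow> ('f m2 \<Rightarrow> 'k) \<Rightarrow> 'w" where
  "res \<Phi> = (\<lambda>f. if f \<in> kappa1 v then \<Phi> f else 0)"

lemma res_into:
  assumes \<Phi>: "\<Phi> \<in> HomOn GL2 (IndP1 v) scale act"
  shows "res \<Phi> \<in> HomOn Bor (kappa1 v) scale act"
proof -
  have l1: "\<forall>f\<in>kappa1 v. \<forall>g\<in>kappa1 v. res \<Phi> (\<lambda>x. f x + g x) = res \<Phi> f + res \<Phi> g"
  proof (intro ballI)
    fix f g :: "'f m2 \<Rightarrow> 'k" assume f: "f \<in> kappa1 v" and g: "g \<in> kappa1 v"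
    have "(\<lambda>x. f x + g x) \<in> kappa1 v" using kap_add[OF f g] .
    then show "res \<Phi> (\<lambda>x. f x + g x) = res \<Phi> f + res \<Phi> g"
      using f g hom_add[OF \<Phi> kap_Ind[OF f] kap_Ind[OF g]] by (simp add: res_def)
  qed
  have l2: "\<forall>c. \<forall>f\<in>kappa1 v. res \<Phi> (\<lambda>x. c * f x) = scale c (res \<Phi> f)"
  proof (intro allI ballI)
    fix c and f :: "'f m2 \<Rightarrow> 'k" assume f: "f \<in> kappa1 v"
    have "(\<lambda>x. c * f x) \<in> kappa1 v" using kap_scal[OF f] .
    then show "res \<Phi> (\<lambda>x. c * f x) = scale c (res \<Phi> f)"
      using f hom_scal[OF \<Phi> kap_Ind[OF f]] by (simp add: res_def)
  qed
  have l3: "\<forall>h\<in>Bor. \<forall>f\<in>kappa1 v. res \<Phi> (rtrans h f) = act h (res \<Phi> f)"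
  proof (intro ballI)
    fix h :: "'f m2" and f :: "'f m2 \<Rightarrow> 'k" assume h: "h \<in> Bor" and f: "f \<in> kappa1 v"
    have "rtrans h f \<in> kappa1 v" using kap_Bor[OF h f] .
    then show "res \<Phi> (rtrans h f) = act h (res \<Phi> f)"
      using hom_eq[OF \<Phi> Bor_GL2[OF h] kap_Ind[OF f]] f by (simp add: res_def)
  qed
  have l4: "\<forall>f. f \<notin> kappa1 v \<longrightarrow> res \<Phi> f = 0" by (simp add: res_def)
  show ?thesis unfolding HomOn_def lin_on_def using l1 l2 l3 l4 by blast
qed

lemma e2I: "(\<lambda>x. oneG x - ballf 0 0 x) \<in> IndP1 v" using Ind_diff[OF oneG_Ind eO_Ind] .

lemma split_fun': "f \<in> IndP1 v \<Longrightarrow> (\<lambda>x. f x * a x + f x * (oneG x - a x)) = f"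
  by (rule ext) (auto simp: oneG_def algebra_simps Ind_out)

lemma Hom_det:
  assumes \<Phi>: "\<Phi> \<in> HomOn GL2 (IndP1 v) scale act" and f: "f \<in> IndP1 v"
  shows "\<Phi> f = \<Phi> (\<lambda>x. f x * ballf 0 0 x) + act sS (\<Phi> (rtrans sS (\<lambda>x. f x * (oneG x - ballf 0 0 x))))"
proof -
  define F where "F = (\<lambda>x. f x * (oneG x - ballf 0 0 x))"
  have FI: "F \<in> IndP1 v" using Ind_mult[OF f e2I] F_def by simp
  have feI: "(\<lambda>x. f x * ballf 0 0 x) \<in> IndP1 v" using Ind_mult[OF f eO_Ind] .
  have "\<Phi> f = \<Phi> (\<lambda>x. f x * ballf 0 0 x) + \<Phi> F"
    using hom_add[OF \<Phi> feI FI] split_fun'[OF f, of "ballf 0 0"] F_def by simp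
  moreover have "rtrans sS (rtrans sS F) = F"
    using rtrans_comp[OF sS_GL2, of sS F] sS_sS[where 'f='f] rtrans_one[of F] Ind_out[OF FI] by simp
  then have "\<Phi> F = act sS (\<Phi> (rtrans sS F))"
    using hom_eq[OF \<Phi> sS_GL2 Ind_rtrans[OF FI sS_GL2]] by simp
  ultimately show ?thesis using F_def by simp
qed

lemma res_inj:
  assumes \<Phi>1: "\<Phi>1 \<in> HomOn GL2 (IndP1 v) scale act" and \<Phi>2: "\<Phi>2 \<in> HomOn GL2 (IndP1 v) scale act"
    and e: "res \<Phi>1 = res \<Phi>2"
  shows "\<Phi>1 = \<Phi>2"
proof (rule ext)
  fix f :: "'f m2 \<Rightarrow> 'k"
  have agree: "g \<in> kappa1 v \<Longrightarrow> \<Phi>1 g = \<Phi>2 g" for g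
    using fun_cong[OF e, of g] by (simp add: res_def)
  show "\<Phi>1 f = \<Phi>2 f"
  proof (cases "f \<in> IndP1 v")
    case False then show ?thesis using hom_out[OF \<Phi>1] hom_out[OF \<Phi>2] by simp
  next
    case True
    have k1: "(\<lambda>x. f x * ballf 0 0 x) \<in> kappa1 v"
      using Ind_mult[OF True eO_Ind] by (simp add: kap_iff ballf_one)
    have k2: "rtrans sS (\<lambda>x. f x * (oneG x - ballf 0 0 x)) \<in> kappa1 v"
      using rtrans_kap[OF Ind_mult[OF True e2I] sS_GL2] by (simp add: eO_sS oneG_def)
    show ?thesis using Hom_det[OF \<Phi>1 True] Hom_det[OF \<Phi>2 True] agree[OF k1] agree[OF k2] by simp
  qed
qed

lemma res_surj:
  assumes \<psi>: "\<psi> \<in> HomOn Bor (kappa1 v) scale act"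
  shows "\<exists>\<Phi>\<in>HomOn GL2 (IndP1 v) scale act. res \<Phi> = \<psi>"
proof -
  interpret P: psictx v p scale act \<psi>
    by (unfold_locales) (rule \<psi>)
  have "res P.Phi = \<psi>"
    unfolding res_def using P.Phi_res hom_out[OF \<psi>] by (auto intro!: ext)
  then show ?thesis using P.Phi_Hom by blast
qed

lemma part3: "bij_betw (\<lambda>\<Phi> f. if f \<in> kappa1 v then \<Phi> f else 0)
         (HomOn GL2 (IndP1 v) scale act) (HomOn Bor (kappa1 v) scale act)"
proof -
  have r: "(\<lambda>\<Phi> f. if f \<in> kappa1 v then \<Phi> f else 0) = res" by (simp add: res_def[abs_def])
  show ?thesis unfolding r bij_betw_def
  proof
    show "inj_on res (HomOn GL2 (IndP1 v) scale act)" using res_inj by (auto intro: inj_onI)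
    show "res ` HomOn GL2 (IndP1 v) scale act = HomOn Bor (kappa1 v) scale act"
      using res_into res_surj by blast
  qed
qed

definition Dm :: "('f m2 \<Rightarrow> 'k) \<Rightarrow> ('f m2 \<Rightarrow> 'k)" where
  "Dm f = (\<lambda>x. f x - f m2one * oneG x)"

lemma Dm_kap: "f \<in> IndP1 v \<Longrightarrow> Dm f \<in> kappa1 v"
  unfolding Dm_def kap_iff using Ind_diff[OF _ Ind_scal[OF oneG_Ind]] by (simp add: oneG_def)

lemma Dm_kap_id: "f \<in> kappa1 v \<Longrightarrow> Dm f = f"
  by (simp add: Dm_def kap_iff)

definition Mm :: "(('f m2 \<Rightarrow> 'k) \<Rightarrow> 'w) \<Rightarrow> ('f m2 \<Rightarrow> 'k) \<Rightarrow> 'w" where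
  "Mm \<Phi> = (\<lambda>f. if f \<in> IndP1 v then \<Phi> (Dm f) else 0)"

lemma Mm_into:
  assumes \<Phi>: "\<Phi> \<in> HomOn GL2 (IndP1 v) scale act"
  shows "Mm \<Phi> \<in> HomP_Sp v scale act"
proof -
  have add: "Mm \<Phi> (\<lambda>x. f x + g x) = Mm \<Phi> f + Mm \<Phi> g" if f: "f \<in> IndP1 v" and g: "g \<in> IndP1 v" for f g
  proof -
    have "Dm (\<lambda>x. f x + g x) = (\<lambda>x. Dm f x + Dm g x)" by (simp add: Dm_def algebra_simps)
    then show ?thesis unfolding Mm_def using f g Ind_add[OF f g] hom_add[OF \<Phi> kap_Ind[OF Dm_kap[OF f]] kap_Ind[OF Dm_kap[OF g]]]
      by simp
  qed
  have scal: "Mm \<Phi> (\<lambda>x. c * f x) = scale c (Mm \<Phi> f)" if f: "f \<in> IndP1 v" for f c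
  proof -
    have "Dm (\<lambda>x. c * f x) = (\<lambda>x. c * Dm f x)" by (simp add: Dm_def algebra_simps)
    then show ?thesis unfolding Mm_def using f Ind_scal[OF f] hom_scal[OF \<Phi> kap_Ind[OF Dm_kap[OF f]]]
      by simp
  qed
  have eq: "Mm \<Phi> (rtrans b f) = act b (Mm \<Phi> f)" if b: "b \<in> Bor" and f: "f \<in> IndP1 v" for b f
  proof -
    have bG: "b \<in> GL2" using Bor_GL2[OF b] .
    have fb: "f b = f m2one" using Ind_left[OF f b one_GL2] by simp
    have "Dm (rtrans b f) = rtrans b (Dm f)"
      by (rule ext) (simp add: Dm_def rtrans_def fb oneG_def GL2_mult bG)
    then show ?thesis unfolding Mm_def using f Ind_rtrans[OF f bG]
        hom_eq[OF \<Phi> bG kap_Ind[OF Dm_kap[OF f]]] by simp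
  qed
  have one: "Mm \<Phi> oneG = 0"
  proof -
    have "Dm oneG = (\<lambda>x. 0)" by (rule ext) (simp add: Dm_def oneG_def)
    then show ?thesis unfolding Mm_def using oneG_Ind hom_zero[OF \<Phi> zero_Ind] by simp
  qed
  have "Mm \<Phi> \<in> HomOn Bor (IndP1 v) scale act"
    unfolding HomOn_def lin_on_def using add scal eq by (auto simp: Mm_def)
  then show ?thesis using one by (simp add: HomP_Sp_def)
qed

lemma Mm_inj:
  assumes \<Phi>1: "\<Phi>1 \<in> HomOn GL2 (IndP1 v) scale act" and \<Phi>2: "\<Phi>2 \<in> HomOn GL2 (IndP1 v) scale act"
    and e: "Mm \<Phi>1 = Mm \<Phi>2"
  shows "\<Phi>1 = \<Phi>2"
proof -
  have "res \<Phi>1 = res \<Phi>2"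
  proof (rule ext)
    fix f
    show "res \<Phi>1 f = res \<Phi>2 f"
    proof (cases "f \<in> kappa1 v")
      case True
      then show ?thesis using fun_cong[OF e, of f] kap_Ind[OF True] Dm_kap_id[OF True]
        by (simp add: res_def Mm_def)
    qed (simp add: res_def)
  qed
  then show ?thesis using res_inj[OF \<Phi>1 \<Phi>2] by simp
qed

lemma Mm_surj:
  assumes \<chi>: "\<chi> \<in> HomP_Sp v scale act"
  shows "\<exists>\<Phi>\<in>HomOn GL2 (IndP1 v) scale act. Mm \<Phi> = \<chi>"
proof -
  have \<chi>H: "\<chi> \<in> HomOn Bor (IndP1 v) scale act" and \<chi>1: "\<chi> oneG = 0"
    using \<chi> by (auto simp: HomP_Sp_def)
  define \<psi> where "\<psi> = (\<lambda>f. if f \<in> kappa1 v then \<chi> f else 0)"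
  have l1: "\<forall>f\<in>kappa1 v. \<forall>g\<in>kappa1 v. \<psi> (\<lambda>x. f x + g x) = \<psi> f + \<psi> g"
  proof (intro ballI)
    fix f g :: "'f m2 \<Rightarrow> 'k" assume f: "f \<in> kappa1 v" and g: "g \<in> kappa1 v"
    have "(\<lambda>x. f x + g x) \<in> kappa1 v" using kap_add[OF f g] .
    then show "\<psi> (\<lambda>x. f x + g x) = \<psi> f + \<psi> g"
      using f g hom_add[OF \<chi>H kap_Ind[OF f] kap_Ind[OF g]] by (simp add: \<psi>_def)
  qed
  have l2: "\<forall>c. \<forall>f\<in>kappa1 v. \<psi> (\<lambda>x. c * f x) = scale c (\<psi> f)"
  proof (intro allI ballI)
    fix c and f :: "'f m2 \<Rightarrow> 'k" assume f: "f \<in> kappa1 v"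
    have "(\<lambda>x. c * f x) \<in> kappa1 v" using kap_scal[OF f] .
    then show "\<psi> (\<lambda>x. c * f x) = scale c (\<psi> f)"
      using f hom_scal[OF \<chi>H kap_Ind[OF f]] by (simp add: \<psi>_def)
  qed
  have l3: "\<forall>h\<in>Bor. \<forall>f\<in>kappa1 v. \<psi> (rtrans h f) = act h (\<psi> f)"
  proof (intro ballI)
    fix h :: "'f m2" and f :: "'f m2 \<Rightarrow> 'k" assume h: "h \<in> Bor" and f: "f \<in> kappa1 v"
    have "rtrans h f \<in> kappa1 v" using kap_Bor[OF h f] .
    then show "\<psi> (rtrans h f) = act h (\<psi> f)" using hom_eq[OF \<chi>H h kap_Ind[OF f]] f by (simp add: \<psi>_def)
  qed
  have l4: "\<forall>f. f \<notin> kappa1 v \<longrightarrow> \<psi> f = 0" by (simp add: \<psi>_def)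
  have \<psi>H: "\<psi> \<in> HomOn Bor (kappa1 v) scale act"
    unfolding HomOn_def lin_on_def using l1 l2 l3 l4 by blast
  obtain \<Phi> where \<Phi>: "\<Phi> \<in> HomOn GL2 (IndP1 v) scale act" "res \<Phi> = \<psi>" using res_surj[OF \<psi>H] by blast
  have "Mm \<Phi> = \<chi>"
  proof (rule ext)
    fix f
    show "Mm \<Phi> f = \<chi> f"
    proof (cases "f \<in> IndP1 v")
      case False then show ?thesis using hom_out[OF \<chi>H False] by (simp add: Mm_def)
    next
      case True
      have dk: "Dm f \<in> kappa1 v" using Dm_kap[OF True] .
      have "Mm \<Phi> f = \<chi> (Dm f)" using fun_cong[OF \<Phi>(2), of "Dm f"] dk True
        by (simp add: Mm_def res_def \<psi>_def)
      moreover have "\<chi> f = \<chi> (Dm f) + scale (f m2one) (\<chi> oneG)"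
      proof -
        have "f = (\<lambda>x. Dm f x + f m2one * oneG x)" by (simp add: Dm_def)
        then show ?thesis
          using hom_add[OF \<chi>H kap_Ind[OF dk] Ind_scal[OF oneG_Ind, of "f m2one"]]
            hom_scal[OF \<chi>H oneG_Ind, of "f m2one"] by metis
      qed
      ultimately show ?thesis using \<chi>1 scale_zero by simp
    qed
  qed
  then show ?thesis using \<Phi>(1) by blast
qed

lemma part4: "bij_betw (\<lambda>\<Phi> f. if f \<in> IndP1 v then \<Phi> (\<lambda>x. f x - f m2one * oneG x) else 0)
         (HomOn GL2 (IndP1 v) scale act) (HomP_Sp v scale act)"
proof -
  have r: "(\<lambda>\<Phi> f. if f \<in> IndP1 v then \<Phi> (\<lambda>x. f x - f m2one * oneG x) else 0) = Mm"
    by (intro ext) (simp add: Mm_def Dm_def)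
  show ?thesis unfolding r bij_betw_def
  proof
    show "inj_on Mm (HomOn GL2 (IndP1 v) scale act)" using Mm_inj by (auto intro: inj_onI)
    show "Mm ` HomOn GL2 (IndP1 v) scale act = HomP_Sp v scale act"
      using Mm_into Mm_surj by blast
  qed
qed

lemma part1: "\<forall>b\<in>Bor. \<forall>f\<in>(kappa1 v :: ('f m2 \<Rightarrow> 'k) set). rtrans b f \<in> kappa1 v"
  using kap_Bor by blast

end

theorem corollary5p6:
  fixes v :: "'f::field \<Rightarrow> int" and p :: nat
    and scale :: "'k::field \<Rightarrow> 'w::ab_group_add \<Rightarrow> 'w"
    and act :: "'f m2 \<Rightarrow> 'w \<Rightarrow> 'w"
  assumes "nonarch_local_field v p"
    and "alg_closure_Fp TYPE('k) p"
    and "smooth_rep v scale act"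
  shows "(\<forall>b\<in>Bor. \<forall>f\<in>(kappa1 v :: ('f m2 \<Rightarrow> 'k) set). rtrans b f \<in> kappa1 v)
    \<and> bij_betw sp_class (kappa1 v :: ('f m2 \<Rightarrow> 'k) set) (Sp v)
    \<and> bij_betw (\<lambda>\<Phi> f. if f \<in> kappa1 v then \<Phi> f else 0)
         (HomOn GL2 (IndP1 v) scale act) (HomOn Bor (kappa1 v) scale act)
    \<and> bij_betw (\<lambda>\<Phi> f. if f \<in> IndP1 v then \<Phi> (\<lambda>x. f x - f m2one * oneG x) else 0)
         (HomOn GL2 (IndP1 v) scale act) (HomP_Sp v scale act)"
proof -
  interpret R: rep v p scale act
    using assms(1,3) by (simp add: rep_def rep_axioms_def nalf_def)
  show ?thesis using R.part1 R.part2 R.part3 R.part4 by blast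
qed


end
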